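(* Let $\Sigma_\iota[\lambda]:=\{\mathbf{x}\in \mathbb{Z}_\iota(\lambda)\mid \varphi(\mathbf{x})\ge 0 \text{ for all } \varphi\in\Xi_\iota[\lambda]\}$. Then $\Sigma_\iota[\lambda]$ is a subcrystal of $\mathrm{Im}(\Psi^{\lambda}_{\iota})$; that is, $\Sigma_\iota[\lambda]\subseteq \mathrm{Im}(\Psi^{\lambda}_{\iota})$ and for every $\mathbf{x}\in\Sigma_\iota[\lambda]$ and $i\in\{1,2\}$, each of $\tilde e_i\mathbf{x}$, $\tilde f_i\mathbf{x}$ is either $\mathbf{0}$ or lies in $\Sigma_\iota[\lambda]$.
   Context: Let $a_1,a_2\in\mathbb{Z}_{\ge1}$ with $a_1a_2>4$, let $A=\begin{pmatrix}2&-a_1\\-a_2&2\end{pmatrix}$, $I=\{1,2\}$, and let $\mathfrak g=\mathfrak g(A)$ be the associated Kac–Moody algebra with simple roots $\alpha_1,\alpha_2$, simple coroots $\alpha_1^\vee,\alpha_2^\vee$ (so $\langle\alpha_2,\alpha_1^\vee\rangle=-a_1$, $\langle\alpha_1,\alpha_2^\vee\rangle=-a_2$), fundamental weights $\Lambda_1,\Lambda_2$, weight lattice $P=\mathbb{Z}\Lambda_1\oplus\mathbb{Z}\Lambda_2$. Crystals are Kashiwara crystals with operators $\tilde e_i,\tilde f_i$ (taking values in the crystal or an extra element $\mathbf 0$), $\varepsilon_i,\varphi_i,\mathrm{wt}$. For $k\in\mathbb{Z}$ put $i_k=1$ if $k$ is odd and $i_k=2$ if $k$ is even; write $a_{i_k}$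 for $a_1$ or $a_2$ accordingly. Crystal $\mathbb{Z}^{+\infty}_{\ge0}$: elements $\hat x=(\dots,x_2,x_1)$, $x_k\in\mathbb{Z}_{\ge0}$, $x_k=0$ for $k\gg0$. For $k\ge1$ let $\sigma^+_k(\hat x)=x_k+\sum_{j>k}\langle\alpha_{i_j},\alpha_{i_k}^\vee\rangle x_j$, $\sigma^+_{(i)}=\max\{\sigma^+_k: k\ge1, i_k=i\}$, $M^+_{(i)}$ the set of such $k$ attaining the max. Then $\mathrm{wt}(\hat x)=-\sum_j x_j\alpha_{i_j}$, $\varepsilon_i=\sigma^+_{(i)}$, $\varphi_i=\varepsilon_i+\langle\mathrm{wt},\alpha_i^\vee\rangle$; $\tilde e_i$ subtracts $1$ from $x_{\max M^+_{(i)}}$ if $\sigma^+_{(i)}>0$ and gives $\mathbf 0$ otherwise; $\tilde f_i$ adds $1$ to $x_{\min M^+_{(i)}}$. Crystal $\mathbb{Z}^{-\infty}_{\le0}$: elements $\hat x=(x_0,x_{-1},\dots)$, $x_k\in\mathbb{Z}_{\le0}$, $x_k=0$ for $k\ll0$; for $k\le0$, $\sigma^-_k=-x_k-\sum_{j<k}\langle\alpha_{i_j},\alpha_{i_k}^\vee\rangle x_j$, $\sigma^-_{(i)}$ the max over $k\le0$ with $i_k=i$, $M^-_{(i)}$ the maximizers; $\mathrm{wt}=-\sum_j x_j\alpha_{i_j}$, $\varphi_i=\sigma^-_{(i)}$, $\varepsilon_i=\varphi_i-\langle\mathrm{wt},\alpha_i^\vee\rangle$; $\tilde e_i$ subtracts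 $1$ from $x_{\max M^-_{(i)}}$; $\tilde f_i$ adds $1$ to $x_{\min M^-_{(i)}}$ if $\sigma^-_{(i)}>0$, and is $\mathbf 0$ otherwise. For $\mu\in P$, $\mathbb{Z}_\iota(\mu)=\mathbb{Z}^{+\infty}_{\ge0}\otimes\mathcal T_\mu\otimes\mathbb{Z}^{-\infty}_{\le0}$, whose elements are $\mathbf x=(\dots,x_2,x_1)\otimes t_\mu\otimes(x_0,x_{-1},\dots)$, with: $\mathrm{wt}(\mathbf x)=\mu-\sum_{j\in\mathbb Z}x_j\alpha_{i_j}$; $\sigma_k(\mathbf x)=\sigma^+_k$ for $k\ge1$, $\sigma_k(\mathbf x)=\sigma^-_k-\langle\mathrm{wt}(\mathbf x),\alpha_{i_k}^\vee\rangle$ for $k\le0$; $\sigma_{(i)}=\max\{\sigma_k:i_k=i\}$, $M_{(i)}$ the maximizers; $\varepsilon_i=\sigma_{(i)}$, $\varphi_i=\varepsilon_i+\langle\mathrm{wt},\alpha_i^\vee\rangle$; if $\varepsilon_i>0$, $\tilde e_i$ subtracts $1$ from $x_{\max M_{(i)}}$, else $\tilde e_i\mathbf x=\mathbf 0$; if $\varphi_i>0$, $\tilde f_i$ adds $1$ to $x_{\min M_{(i)}}$, else $\tilde f_i\mathbf x=\mathbf 0$. Let $\mathcal B(\infty)$, $\mathcal B(-\infty)$ be the crystal bases of $U_q^-(\mathfrak g)$, $U_q^+(\mathfrak g)$, and $\Psi^+:\mathcal B(\infty)\hookrightarrow\mathbb{Z}^{+\infty}_{\ge0}$, $\Psi^-:\mathcal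 B(-\infty)\hookrightarrow\mathbb{Z}^{-\infty}_{\le0}$ the Nakashima–Zelevinsky embeddings of crystals for these sequences (sending the highest/lowest elements to the zero sequences). Set $\Psi^\mu_\iota=\Psi^+\otimes\mathrm{id}\otimes\Psi^-$, so $\mathrm{Im}(\Psi^\mu_\iota)=\mathrm{Im}(\Psi^+)\otimes t_\mu\otimes\mathrm{Im}(\Psi^-)\subseteq\mathbb Z_\iota(\mu)$. Put $\alpha=\frac{a_1a_2+\sqrt{a_1^2a_2^2-4a_1a_2}}{2a_2}$, $\beta=\frac{a_1a_2+\sqrt{a_1^2a_2^2-4a_1a_2}}{2a_1}$, $\gamma_k=\alpha$ for $k$ even and $\gamma_k=\beta$ for $k$ odd. Fix $\lambda=k_1\Lambda_1-k_2\Lambda_2$ with $k_1,k_2\in\mathbb Z_{>0}$ such that: if $a_1,a_2\ge2$, either $k_2\le k_1<(a_1-1)k_2$ or $k_1<k_2\le(a_2-1)k_1$; if $a_1=1$, $2k_1\le k_2\le(a_2-2)k_1$; if $a_2=1$, $2k_2\le k_1\le(a_1-2)k_2$. Define $p_0=k_2$, $p_1=k_1$, and for $m\ge0$: $p_{m+2}=a_2p_{m+1}-p_m$ ($m$ even), $p_{m+2}=a_1p_{m+1}-p_m$ ($m$ odd); for $m<0$: $p_m=a_2p_{m+1}-p_{m+2}$ ($m$ even), $p_m=a_1p_{m+1}-p_{m+2}$ ($m$ odd). For $k\in\mathbb Z$ let $\zeta_k$ be the linear function $\mathbf x\mapsto x_k$. Let $\Xi_\iota[\lambda]=\{\gamma_0p_0+\gamma_0\zeta_0-\zeta_1,\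 \gamma_1p_1+\zeta_0-\gamma_1\zeta_1\}\cup\{p_k-\zeta_k,\ \gamma_k\zeta_k-\zeta_{k+1},\ \gamma_{k+1}p_{k+1}-p_k+\zeta_k-\gamma_{k+1}\zeta_{k+1}\mid k\ge1\}\cup\{p_k+\zeta_k,\ \zeta_{k-1}-\gamma_k\zeta_k,\ \gamma_{k-1}p_{k-1}-p_k+\gamma_{k-1}\zeta_{k-1}-\zeta_k\mid k\le0\}$. *)

theory Defs
  imports Complex_Main
begin

(* Elements of Z_iota(mu) are encoded as functions x :: int => int, x k = x_k.
   Weights mu in P are encoded by (m1, m2) = (<mu,alpha_1^vee>, <mu,alpha_2^vee>). *)

definition ik :: "int \<Rightarrow> int" where
  "ik k = (if odd k then 1 else 2)"

(* cartan a1 a2 i j = <alpha_j, alpha_i^vee> *)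
definition cartan :: "int \<Rightarrow> int \<Rightarrow> int \<Rightarrow> int \<Rightarrow> int" where
  "cartan a1 a2 i j = (if i = j then 2 else if i = 1 then - a1 else - a2)"

definition sigma_plus :: "int \<Rightarrow> int \<Rightarrow> (int \<Rightarrow> int) \<Rightarrow> int \<Rightarrow> int" where
  "sigma_plus a1 a2 x k =
     x k + (\<Sum>j\<in>{j. j > k \<and> x j \<noteq> 0}. cartan a1 a2 (ik k) (ik j) * x j)"

definition sigma_minus :: "int \<Rightarrow> int \<Rightarrow> (int \<Rightarrow> int) \<Rightarrow> int \<Rightarrow> int" where
  "sigma_minus a1 a2 x k =
     - x k - (\<Sum>j\<in>{j. j < k \<and> x j \<noteq> 0}. cartan a1 a2 (ik k) (ik j) * x j)"

definition wtc :: "int \<Rightarrow> int \<Rightarrow> int \<Rightarrow> int \<Rightarrow> (int \<Rightarrow> int) \<Rightarrow> int \<Rightarrow> int" where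
  "wtc a1 a2 m1 m2 x i =
     (if i = 1 then m1 else m2) - (\<Sum>j\<in>{j. x j \<noteq> 0}. cartan a1 a2 i (ik j) * x j)"

definition sigmaP_I :: "int \<Rightarrow> int \<Rightarrow> (int \<Rightarrow> int) \<Rightarrow> int \<Rightarrow> int" where
  "sigmaP_I a1 a2 x i = Max {sigma_plus a1 a2 x k | k. k \<ge> 1 \<and> ik k = i}"

definition fplus :: "int \<Rightarrow> int \<Rightarrow> int \<Rightarrow> (int \<Rightarrow> int) \<Rightarrow> (int \<Rightarrow> int)" where
  "fplus a1 a2 i x =
     (let k0 = (LEAST k. k \<ge> 1 \<and> ik k = i \<and> sigma_plus a1 a2 x k = sigmaP_I a1 a2 x i)
      in x(k0 := x k0 + 1))"

(* image of the Nakashima-Zelevinsky embedding of B(infinity): generated from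
   the zero sequence by the operators f_i *)
inductive_set plus_img :: "int \<Rightarrow> int \<Rightarrow> (int \<Rightarrow> int) set" for a1 a2 where
  zero: "(\<lambda>_. 0) \<in> plus_img a1 a2"
| step: "x \<in> plus_img a1 a2 \<Longrightarrow> i \<in> {1, 2} \<Longrightarrow> fplus a1 a2 i x \<in> plus_img a1 a2"

definition sigmaM_I :: "int \<Rightarrow> int \<Rightarrow> (int \<Rightarrow> int) \<Rightarrow> int \<Rightarrow> int" where
  "sigmaM_I a1 a2 x i = Max {sigma_minus a1 a2 x k | k. k \<le> 0 \<and> ik k = i}"

definition eminus :: "int \<Rightarrow> int \<Rightarrow> int \<Rightarrow> (int \<Rightarrow> int) \<Rightarrow> (int \<Rightarrow> int)" where
  "eminus a1 a2 i x =
     (let k0 = (GREATEST k. k \<le> 0 \<and> ik k = i \<and> sigma_minus a1 a2 x k = sigmaM_I a1 a2 x i)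
      in x(k0 := x k0 - 1))"

(* image of the embedding of B(-infinity): generated from zero by the operators e_i *)
inductive_set minus_img :: "int \<Rightarrow> int \<Rightarrow> (int \<Rightarrow> int) set" for a1 a2 where
  zero: "(\<lambda>_. 0) \<in> minus_img a1 a2"
| step: "x \<in> minus_img a1 a2 \<Longrightarrow> i \<in> {1, 2} \<Longrightarrow> eminus a1 a2 i x \<in> minus_img a1 a2"

definition Zset :: "(int \<Rightarrow> int) set" where
  "Zset = {x. finite {k. x k \<noteq> 0} \<and> (\<forall>k\<ge>1. x k \<ge> 0) \<and> (\<forall>k\<le>0. x k \<le> 0)}"

definition Im_Psi :: "int \<Rightarrow> int \<Rightarrow> (int \<Rightarrow> int) set" where
  "Im_Psi a1 a2 = {x. (\<lambda>k. if k \<ge> 1 then x k else 0) \<in> plus_img a1 a2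
                     \<and> (\<lambda>k. if k \<le> 0 then x k else 0) \<in> minus_img a1 a2}"

definition sigmaZ :: "int \<Rightarrow> int \<Rightarrow> int \<Rightarrow> int \<Rightarrow> (int \<Rightarrow> int) \<Rightarrow> int \<Rightarrow> int" where
  "sigmaZ a1 a2 m1 m2 x k =
     (if k \<ge> 1 then sigma_plus a1 a2 x k
      else sigma_minus a1 a2 x k - wtc a1 a2 m1 m2 x (ik k))"

definition sigmaZ_I :: "int \<Rightarrow> int \<Rightarrow> int \<Rightarrow> int \<Rightarrow> (int \<Rightarrow> int) \<Rightarrow> int \<Rightarrow> int" where
  "sigmaZ_I a1 a2 m1 m2 x i = Max {sigmaZ a1 a2 m1 m2 x k | k. ik k = i}"

definition epsZ :: "int \<Rightarrow> int \<Rightarrow> int \<Rightarrow> int \<Rightarrow> (int \<Rightarrow> int) \<Rightarrow> int \<Rightarrow> int" where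
  "epsZ a1 a2 m1 m2 x i = sigmaZ_I a1 a2 m1 m2 x i"

definition phiZ :: "int \<Rightarrow> int \<Rightarrow> int \<Rightarrow> int \<Rightarrow> (int \<Rightarrow> int) \<Rightarrow> int \<Rightarrow> int" where
  "phiZ a1 a2 m1 m2 x i = epsZ a1 a2 m1 m2 x i + wtc a1 a2 m1 m2 x i"

(* None encodes the extra element 0 *)
definition etildeZ :: "int \<Rightarrow> int \<Rightarrow> int \<Rightarrow> int \<Rightarrow> int \<Rightarrow> (int \<Rightarrow> int) \<Rightarrow> (int \<Rightarrow> int) option" where
  "etildeZ a1 a2 m1 m2 i x =
     (if epsZ a1 a2 m1 m2 x i > 0 then
        (let k0 = (GREATEST k. ik k = i \<and> sigmaZ a1 a2 m1 m2 x k = sigmaZ_I a1 a2 m1 m2 x i)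
         in Some (x(k0 := x k0 - 1)))
      else None)"

definition ftildeZ :: "int \<Rightarrow> int \<Rightarrow> int \<Rightarrow> int \<Rightarrow> int \<Rightarrow> (int \<Rightarrow> int) \<Rightarrow> (int \<Rightarrow> int) option" where
  "ftildeZ a1 a2 m1 m2 i x =
     (if phiZ a1 a2 m1 m2 x i > 0 then
        (let k0 = (LEAST k. ik k = i \<and> sigmaZ a1 a2 m1 m2 x k = sigmaZ_I a1 a2 m1 m2 x i)
         in Some (x(k0 := x k0 + 1)))
      else None)"

definition alpha_c :: "int \<Rightarrow> int \<Rightarrow> real" where
  "alpha_c a1 a2 = (a1 * a2 + sqrt (a1\<^sup>2 * a2\<^sup>2 - 4 * a1 * a2)) / (2 * a2)"

definition beta_c :: "int \<Rightarrow> int \<Rightarrow> real" where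
  "beta_c a1 a2 = (a1 * a2 + sqrt (a1\<^sup>2 * a2\<^sup>2 - 4 * a1 * a2)) / (2 * a1)"

definition gam :: "int \<Rightarrow> int \<Rightarrow> int \<Rightarrow> real" where
  "gam a1 a2 k = (if even k then alpha_c a1 a2 else beta_c a1 a2)"

fun pp :: "int \<Rightarrow> int \<Rightarrow> int \<Rightarrow> int \<Rightarrow> nat \<Rightarrow> int" where
  "pp a1 a2 k1 k2 0 = k2"
| "pp a1 a2 k1 k2 (Suc 0) = k1"
| "pp a1 a2 k1 k2 (Suc (Suc m)) =
     (if even m then a2 else a1) * pp a1 a2 k1 k2 (Suc m) - pp a1 a2 k1 k2 m"

fun pm :: "int \<Rightarrow> int \<Rightarrow> int \<Rightarrow> int \<Rightarrow> nat \<Rightarrow> int" where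
  "pm a1 a2 k1 k2 0 = k2"
| "pm a1 a2 k1 k2 (Suc 0) = a1 * k2 - k1"
| "pm a1 a2 k1 k2 (Suc (Suc n)) =
     (if even n then a2 else a1) * pm a1 a2 k1 k2 (Suc n) - pm a1 a2 k1 k2 n"

definition p :: "int \<Rightarrow> int \<Rightarrow> int \<Rightarrow> int \<Rightarrow> int \<Rightarrow> int" where
  "p a1 a2 k1 k2 m = (if m \<ge> 0 then pp a1 a2 k1 k2 (nat m) else pm a1 a2 k1 k2 (nat (- m)))"

definition Xi :: "int \<Rightarrow> int \<Rightarrow> int \<Rightarrow> int \<Rightarrow> ((int \<Rightarrow> int) \<Rightarrow> real) set" where
  "Xi a1 a2 k1 k2 =
    (let g = gam a1 a2; P = (\<lambda>m. real_of_int (p a1 a2 k1 k2 m)) in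
     {\<lambda>x. g 0 * P 0 + g 0 * x 0 - x 1,
      \<lambda>x. g 1 * P 1 + x 0 - g 1 * x 1}
     \<union> (\<Union>k\<in>{k. k \<ge> 1}.
          {\<lambda>x. P k - x k,
           \<lambda>x. g k * x k - x (k + 1),
           \<lambda>x. g (k + 1) * P (k + 1) - P k + x k - g (k + 1) * x (k + 1)})
     \<union> (\<Union>k\<in>{k. k \<le> 0}.
          {\<lambda>x. P k + x k,
           \<lambda>x. x (k - 1) - g k * x k,
           \<lambda>x. g (k - 1) * P (k - 1) - P k + g (k - 1) * x (k - 1) - x k}))"

definition SigmaSet :: "int \<Rightarrow> int \<Rightarrow> int \<Rightarrow> int \<Rightarrow> (int \<Rightarrow> int) set" where
  "SigmaSet a1 a2 k1 k2 = {x \<in> Zset. \<forall>\<phi>\<in>Xi a1 a2 k1 k2. \<phi> x \<ge> 0}"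

end

theory Submission
  imports Defs
begin


definition AA :: "int \<Rightarrow> int \<Rightarrow> int \<Rightarrow> int" where
  "AA a1 a2 k = (if odd k then a1 else a2)"

lemma ik_add2[simp]: "ik (k+2) = ik k" by (simp add: ik_def)
lemma ik_sub2[simp]: "ik (k-2) = ik k" by (simp add: ik_def)
lemma ik_12: "ik k = 1 \<or> ik k = 2" by (simp add: ik_def)
lemma ik_next: "ik (k+1) \<noteq> ik k" by (simp add: ik_def)
lemma ik_prev: "ik (k-1) \<noteq> ik k" by (simp add: ik_def)
lemma cartan_same[simp]: "cartan a1 a2 i i = 2" by (simp add: cartan_def)
lemma cartan_next: "cartan a1 a2 (ik k) (ik (k+1)) = - AA a1 a2 k"
  by (simp add: cartan_def ik_def AA_def)
lemma cartan_prev: "cartan a1 a2 (ik k) (ik (k-1)) = - AA a1 a2 k"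
  by (simp add: cartan_def ik_def AA_def)

lemma tail_step:
  fixes x :: "int \<Rightarrow> int"
  assumes "finite {j. x j \<noteq> 0}"
  shows "(\<Sum>j\<in>{j. j > k \<and> x j \<noteq> 0}. f j * x j)
       = f (k+1) * x (k+1) + (\<Sum>j\<in>{j. j > k+1 \<and> x j \<noteq> 0}. f j * x j)"
proof (cases "x (k+1) = 0")
  case True
  then have "{j. j > k \<and> x j \<noteq> 0} = {j. j > k+1 \<and> x j \<noteq> 0}"
    by (intro set_eqI, simp, smt (verit) True)
  then show ?thesis using True by simp
next
  case False
  then have e: "{j. j > k \<and> x j \<noteq> 0} = insert (k+1) {j. j > k+1 \<and> x j \<noteq> 0}" by force
  have "finite {j. j > k+1 \<and> x j \<noteq> 0}" using assms by (rule finite_subset[rotated]) auto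
  then show ?thesis unfolding e by simp
qed

lemma head_step:
  fixes x :: "int \<Rightarrow> int"
  assumes "finite {j. x j \<noteq> 0}"
  shows "(\<Sum>j\<in>{j. j < k \<and> x j \<noteq> 0}. f j * x j)
       = f (k-1) * x (k-1) + (\<Sum>j\<in>{j. j < k-1 \<and> x j \<noteq> 0}. f j * x j)"
proof (cases "x (k-1) = 0")
  case True
  then have "{j. j < k \<and> x j \<noteq> 0} = {j. j < k-1 \<and> x j \<noteq> 0}"
    by (intro set_eqI, simp, smt (verit) True)
  then show ?thesis using True by simp
next
  case False
  then have e: "{j. j < k \<and> x j \<noteq> 0} = insert (k-1) {j. j < k-1 \<and> x j \<noteq> 0}" by force
  have "finite {j. j < k-1 \<and> x j \<noteq> 0}" using assms by (rule finite_subset[rotated]) auto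
  then show ?thesis unfolding e by simp
qed

lemma sp_diff:
  assumes "finite {j. x j \<noteq> 0}"
  shows "sigma_plus a1 a2 x k - sigma_plus a1 a2 x (k+2) = x k - AA a1 a2 k * x (k+1) + x (k+2)"
proof -
  let ?f = "\<lambda>j. cartan a1 a2 (ik k) (ik j)"
  have 1: "sigma_plus a1 a2 x k = x k + (\<Sum>j\<in>{j. j > k \<and> x j \<noteq> 0}. ?f j * x j)"
    by (simp add: sigma_plus_def)
  have 2: "sigma_plus a1 a2 x (k+2) = x (k+2) + (\<Sum>j\<in>{j. j > k+2 \<and> x j \<noteq> 0}. ?f j * x j)"
    by (simp add: sigma_plus_def)
  have 3: "(\<Sum>j\<in>{j. j > k \<and> x j \<noteq> 0}. ?f j * x j) = ?f (k+1) * x (k+1) + ?f (k+2) * x (k+2)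
        + (\<Sum>j\<in>{j. j > k+2 \<and> x j \<noteq> 0}. ?f j * x j)"
    using tail_step[OF assms, where k=k and f= ?f] tail_step[OF assms, where k="k+1" and f= ?f] by (simp add: add.assoc)
  show ?thesis unfolding 1 2 3 using cartan_next[of a1 a2 k] by simp
qed

lemma sm_diff:
  assumes "finite {j. x j \<noteq> 0}"
  shows "sigma_minus a1 a2 x k - sigma_minus a1 a2 x (k-2) = - x k + AA a1 a2 k * x (k-1) - x (k-2)"
proof -
  let ?f = "\<lambda>j. cartan a1 a2 (ik k) (ik j)"
  have 1: "sigma_minus a1 a2 x k = - x k - (\<Sum>j\<in>{j. j < k \<and> x j \<noteq> 0}. ?f j * x j)"
    by (simp add: sigma_minus_def)
  have 2: "sigma_minus a1 a2 x (k-2) = - x (k-2) - (\<Sum>j\<in>{j. j < k-2 \<and> x j \<noteq> 0}. ?f j * x j)"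
    by (simp add: sigma_minus_def)
  have 3: "(\<Sum>j\<in>{j. j < k \<and> x j \<noteq> 0}. ?f j * x j) = ?f (k-1) * x (k-1) + ?f (k-2) * x (k-2)
        + (\<Sum>j\<in>{j. j < k-2 \<and> x j \<noteq> 0}. ?f j * x j)"
    using head_step[OF assms, where k=k and f= ?f] head_step[OF assms, where k="k-1" and f= ?f] by (simp add: add.assoc)
  show ?thesis unfolding 1 2 3 using cartan_prev[of a1 a2 k] by simp
qed



lemma split3:
  fixes x :: "int \<Rightarrow> int"
  assumes fin: "finite {j. x j \<noteq> 0}"
  shows "(\<Sum>j\<in>{j. x j \<noteq> 0}. f j * x j) = (\<Sum>j\<in>{j. j < k \<and> x j \<noteq> 0}. f j * x j)
     + f k * x k + (\<Sum>j\<in>{j. j > k \<and> x j \<noteq> 0}. f j * x j)"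
proof -
  let ?A = "{j. j < k \<and> x j \<noteq> 0}" and ?B = "{j. j > k \<and> x j \<noteq> 0}"
  have fA: "finite ?A" using fin by (rule finite_subset[rotated]) auto
  have fB: "finite ?B" using fin by (rule finite_subset[rotated]) auto
  have dj: "?A \<inter> ?B = {}" by auto
  have AB: "(\<Sum>j\<in>?A \<union> ?B. f j * x j) = (\<Sum>j\<in>?A. f j * x j) + (\<Sum>j\<in>?B. f j * x j)"
    by (rule sum.union_disjoint[OF fA fB dj])
  show ?thesis
  proof (cases "x k = 0")
    case True
    have "j < k \<or> j > k" if "x j \<noteq> 0" for j
    proof -
      have "j \<noteq> k" using that True by metis
      then show ?thesis by (rule neqE) auto
    qed
    then have e: "{j. x j \<noteq> 0} = ?A \<union> ?B" by blast
    show ?thesis unfolding e AB using True by simp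
  next
    case False
    have "j < k \<or> j > k \<or> j = k" for j by (rule linorder_cases) auto
    then have e: "{j. x j \<noteq> 0} = insert k (?A \<union> ?B)" using False by blast
    have "k \<notin> ?A \<union> ?B" by simp
    then show ?thesis unfolding e using AB fA fB by (simp add: algebra_simps)
  qed
qed

definition mm :: "int \<Rightarrow> int \<Rightarrow> int \<Rightarrow> int" where
  "mm m1 m2 i = (if i = 1 then m1 else m2)"

lemma sigmaZ_eq:
  assumes fin: "finite {j. x j \<noteq> 0}"
  shows "sigmaZ a1 a2 m1 m2 x k = sigma_plus a1 a2 x k - (if k \<le> 0 then mm m1 m2 (ik k) else 0)"
  using split3[OF fin, where k=k and f="\<lambda>j. cartan a1 a2 (ik k) (ik j)"]
  by (simp add: sigmaZ_def sigma_plus_def sigma_minus_def wtc_def mm_def)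

lemma wtc_eq:
  "wtc a1 a2 m1 m2 x i = mm m1 m2 i - (\<Sum>j\<in>{j. x j \<noteq> 0}. cartan a1 a2 i (ik j) * x j)"
  by (simp add: wtc_def mm_def)

lemma supp_bound:
  fixes x :: "int \<Rightarrow> int"
  assumes "finite {j. x j \<noteq> 0}"
  obtains N where "N \<ge> 0" "\<And>j. x j \<noteq> 0 \<Longrightarrow> -N \<le> j \<and> j \<le> N"
proof -
  obtain N where "\<And>j. j \<in> {j. x j \<noteq> 0} \<Longrightarrow> \<bar>j\<bar> \<le> N"
    using finite_nat_set_iff_bounded_le assms
    by (metis (mono_tags) Max_ge finite_imageI imageI)
  then show ?thesis using that[of "max N 0"] by fastforce
qed

lemma sp_high:
  assumes "\<And>j. x j \<noteq> 0 \<Longrightarrow> j \<le> N" "k > N"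
  shows "sigma_plus a1 a2 x k = 0"
proof -
  have "{j. j > k \<and> x j \<noteq> 0} = {}" using assms by force
  moreover have "x k = 0" using assms by force
  ultimately show ?thesis by (simp add: sigma_plus_def)
qed

lemma sp_low:
  assumes "\<And>j. x j \<noteq> 0 \<Longrightarrow> -N \<le> j" "k < -N"
  shows "sigma_plus a1 a2 x k = (\<Sum>j\<in>{j. x j \<noteq> 0}. cartan a1 a2 (ik k) (ik j) * x j)"
proof -
  have "{j. j > k \<and> x j \<noteq> 0} = {j. x j \<noteq> 0}" using assms by force
  moreover have "x k = 0" using assms by force
  ultimately show ?thesis by (simp add: sigma_plus_def)
qed

lemma sm_low:
  assumes "\<And>j. x j \<noteq> 0 \<Longrightarrow> -N \<le> j" "k < -N"
  shows "sigma_minus a1 a2 x k = 0"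
proof -
  have "{j. j < k \<and> x j \<noteq> 0} = {}" using assms by force
  moreover have "x k = 0" using assms by force
  ultimately show ?thesis by (simp add: sigma_minus_def)
qed

lemma sm_high:
  assumes "\<And>j. x j \<noteq> 0 \<Longrightarrow> j \<le> N" "k > N"
  shows "sigma_minus a1 a2 x k = - (\<Sum>j\<in>{j. x j \<noteq> 0}. cartan a1 a2 (ik k) (ik j) * x j)"
proof -
  have "{j. j < k \<and> x j \<noteq> 0} = {j. x j \<noteq> 0}" using assms by force
  moreover have "x k = 0" using assms by force
  ultimately show ?thesis by (simp add: sigma_minus_def)
qed

lemma fin_range_per:
  fixes f :: "int \<Rightarrow> 'a"
  assumes N0: "N \<ge> 0" and hi: "\<And>k k'. k > N \<Longrightarrow> k' > N \<Longrightarrow> ik k = ik k' \<Longrightarrow> f k = f k'"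
    and lo: "\<And>k k'. k < -N \<Longrightarrow> k' < -N \<Longrightarrow> ik k = ik k' \<Longrightarrow> f k = f k'"
  shows "finite (range f)"
proof -
  have "range f \<subseteq> f ` {-N-2..N+2}"
  proof
    fix y assume "y \<in> range f"
    then obtain k where y: "y = f k" by auto
    show "y \<in> f ` {-N-2..N+2}"
    proof (cases "k > N")
      case True
      have "ik k = ik (N+1) \<or> ik k = ik (N+2)"
        using ik_12[of k] ik_12[of "N+1"] ik_next[of "N+1"] by (simp add: add.assoc) (metis ik_12)
      then show ?thesis
      proof
        assume "ik k = ik (N+1)" then have yy: "y = f (N+1)" using hi[of k "N+1"] True y by simp
        have "N+1 \<in> {-N-2..N+2}" using N0 by simp then show ?thesis using yy by blast
      next
        assume "ik k = ik (N+2)" then have yy: "y = f (N+2)" using hi[of k "N+2"] True y by simp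
        have "N+2 \<in> {-N-2..N+2}" using N0 by simp then show ?thesis using yy by blast
      qed
    next
      case F: False
      show ?thesis
      proof (cases "k < -N")
        case True
        have "ik k = ik (-N-1) \<or> ik k = ik (-N-2)"
          using ik_12[of k] ik_12[of "-N-1"] ik_prev[of "-N-1"] by (simp add: algebra_simps) (metis ik_12)
        then show ?thesis
        proof
          assume "ik k = ik (-N-1)" then have yy: "y = f (-N-1)" using lo[of k "-N-1"] True y by simp
          have "-N-1 \<in> {-N-2..N+2}" using N0 by simp then show ?thesis using yy by blast
        next
          assume "ik k = ik (-N-2)" then have yy: "y = f (-N-2)" using lo[of k "-N-2"] True y by simp
          have "-N-2 \<in> {-N-2..N+2}" using N0 by simp then show ?thesis using yy by blast
        qed
      next
        case False
        then show ?thesis using F y by force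
      qed
    qed
  qed
  then show ?thesis by (rule finite_subset) simp
qed

lemma fin_sp:
  assumes fin: "finite {j. x j \<noteq> 0}"
  shows "finite (range (sigma_plus a1 a2 x))"
proof -
  obtain N where N: "N \<ge> 0" "\<And>j. x j \<noteq> 0 \<Longrightarrow> -N \<le> j \<and> j \<le> N"
    using supp_bound[OF fin] by blast
  have hi: "sigma_plus a1 a2 x k = 0" if "k > N" for k
    using sp_high[of x N k a1 a2] N that by auto
  have lo: "sigma_plus a1 a2 x k = (\<Sum>j\<in>{j. x j \<noteq> 0}. cartan a1 a2 (ik k) (ik j) * x j)"
    if "k < -N" for k
    using sp_low[of x N k a1 a2] N that by auto
  show ?thesis
    by (rule fin_range_per[where N=N, OF N(1)]) (simp_all only: hi lo)
qed

lemma fin_sm: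
  assumes fin: "finite {j. x j \<noteq> 0}"
  shows "finite (range (sigma_minus a1 a2 x))"
proof -
  obtain N where N: "N \<ge> 0" "\<And>j. x j \<noteq> 0 \<Longrightarrow> -N \<le> j \<and> j \<le> N"
    using supp_bound[OF fin] by blast
  have hi: "sigma_minus a1 a2 x k = - (\<Sum>j\<in>{j. x j \<noteq> 0}. cartan a1 a2 (ik k) (ik j) * x j)" if "k > N" for k
    using sm_high[of x N k a1 a2] N that by auto
  have lo: "sigma_minus a1 a2 x k = 0"
    if "k < -N" for k
    using sm_low[of x N k a1 a2] N that by auto
  show ?thesis
    by (rule fin_range_per[where N=N, OF N(1)]) (simp_all only: hi lo)
qed

lemma fin_sZ:
  assumes fin: "finite {j. x j \<noteq> 0}"
  shows "finite (range (sigmaZ a1 a2 m1 m2 x))"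
proof -
  obtain N where N: "N \<ge> 0" "\<And>j. x j \<noteq> 0 \<Longrightarrow> -N \<le> j \<and> j \<le> N"
    using supp_bound[OF fin] by blast
  have hi: "sigmaZ a1 a2 m1 m2 x k = 0" if "k > N" for k
    using sigmaZ_eq[OF fin, of a1 a2 m1 m2 k] sp_high[of x N k a1 a2] N that by auto
  have lo: "sigmaZ a1 a2 m1 m2 x k = (\<Sum>j\<in>{j. x j \<noteq> 0}. cartan a1 a2 (ik k) (ik j) * x j) - mm m1 m2 (ik k)"
    if "k < -N" for k
    using sigmaZ_eq[OF fin, of a1 a2 m1 m2 k] sp_low[of x N k a1 a2] N that by auto
  show ?thesis
    by (rule fin_range_per[where N=N, OF N(1)]) (simp_all only: hi lo)
qed

lemma fin_sub: "finite (range f) \<Longrightarrow> finite {f k | k. Q k}"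
  by (rule finite_subset[of _ "range f"]) auto



lemma greatest_max:
  fixes f :: "int \<Rightarrow> int"
  assumes fin: "finite {f k | k. Q k}" and q: "Q k1"
    and hi: "\<And>k. Q k \<Longrightarrow> k > N \<Longrightarrow> f k < Max {f k | k. Q k}"
  shows "\<exists>k0. Q k0 \<and> f k0 = Max {f k | k. Q k} \<and> (\<forall>k. Q k \<longrightarrow> f k \<le> Max {f k | k. Q k})
     \<and> (\<forall>k. Q k \<and> k > k0 \<longrightarrow> f k < Max {f k | k. Q k})
     \<and> (GREATEST k. Q k \<and> f k = Max {f k | k. Q k}) = k0"
proof -
  define M where "M = Max {f k | k. Q k}"
  have ne: "{f k | k. Q k} \<noteq> {}" using q by blast
  have "M \<in> {f k | k. Q k}" unfolding M_def by (rule Max_in[OF fin ne])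
  then obtain km where km: "Q km" "f km = M" by blast
  have le: "\<forall>k. Q k \<longrightarrow> f k \<le> M" unfolding M_def using Max_ge[OF fin] by blast
  define T where "T = {k. Q k \<and> f k = M \<and> km \<le> k}"
  have "T \<subseteq> {km..N}"
  proof
    fix k assume "k \<in> T"
    then have "Q k" "f k = M" "km \<le> k" unfolding T_def by auto
    then show "k \<in> {km..N}" using hi[of k] unfolding M_def by force
  qed
  then have fT: "finite T" by (rule finite_subset) simp
  have kmT: "km \<in> T" using km unfolding T_def by simp
  define k0 where "k0 = Max T"
  have k0T: "k0 \<in> T" unfolding k0_def using Max_in[OF fT] kmT by blast
  have gt: "\<forall>k. Q k \<and> k > k0 \<longrightarrow> f k < M"
  proof (intro allI impI)
    fix k assume a: "Q k \<and> k > k0"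
    have "km \<le> k0" using k0T unfolding T_def by simp
    show "f k < M"
    proof (rule ccontr)
      assume "\<not> f k < M"
      then have "f k = M" using le a by force
      then have "k \<in> T" using a \<open>km \<le> k0\<close> unfolding T_def by simp
      then have "k \<le> k0" unfolding k0_def using Max_ge[OF fT] by blast
      then show False using a by simp
    qed
  qed
  have G: "(GREATEST k. Q k \<and> f k = M) = k0"
  proof (rule Greatest_equality)
    show "Q k0 \<and> f k0 = M" using k0T unfolding T_def by simp
    fix y assume "Q y \<and> f y = M"
    then show "y \<le> k0" using gt by force
  qed
  show ?thesis using k0T le gt G unfolding T_def M_def[symmetric] by blast
qed

lemma least_max:
  fixes f :: "int \<Rightarrow> int"
  assumes fin: "finite {f k | k. Q k}" and q: "Q k1"
    and lo: "\<And>k. Q k \<Longrightarrow> k < N \<Longrightarrow> f k < Max {f k | k. Q k}"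
  shows "\<exists>k0. Q k0 \<and> f k0 = Max {f k | k. Q k} \<and> (\<forall>k. Q k \<longrightarrow> f k \<le> Max {f k | k. Q k})
     \<and> (\<forall>k. Q k \<and> k < k0 \<longrightarrow> f k < Max {f k | k. Q k})
     \<and> (LEAST k. Q k \<and> f k = Max {f k | k. Q k}) = k0"
proof -
  define M where "M = Max {f k | k. Q k}"
  have ne: "{f k | k. Q k} \<noteq> {}" using q by blast
  have "M \<in> {f k | k. Q k}" unfolding M_def by (rule Max_in[OF fin ne])
  then obtain km where km: "Q km" "f km = M" by blast
  have le: "\<forall>k. Q k \<longrightarrow> f k \<le> M" unfolding M_def using Max_ge[OF fin] by blast
  define T where "T = {k. Q k \<and> f k = M \<and> k \<le> km}"
  have "T \<subseteq> {N..km}"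
  proof
    fix k assume "k \<in> T"
    then have "Q k" "f k = M" "k \<le> km" unfolding T_def by auto
    then show "k \<in> {N..km}" using lo[of k] unfolding M_def by force
  qed
  then have fT: "finite T" by (rule finite_subset) simp
  have kmT: "km \<in> T" using km unfolding T_def by simp
  define k0 where "k0 = Min T"
  have k0T: "k0 \<in> T" unfolding k0_def using Min_in[OF fT] kmT by blast
  have gt: "\<forall>k. Q k \<and> k < k0 \<longrightarrow> f k < M"
  proof (intro allI impI)
    fix k assume a: "Q k \<and> k < k0"
    have "k0 \<le> km" using k0T unfolding T_def by simp
    show "f k < M"
    proof (rule ccontr)
      assume "\<not> f k < M"
      then have "f k = M" using le a by force
      then have "k \<in> T" using a \<open>k0 \<le> km\<close> unfolding T_def by simp
      then have "k0 \<le> k" unfolding k0_def using Min_le[OF fT] by blast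
      then show False using a by simp
    qed
  qed
  have G: "(LEAST k. Q k \<and> f k = M) = k0"
  proof (rule Least_equality)
    show "Q k0 \<and> f k0 = M" using k0T unfolding T_def by simp
    fix y assume "Q y \<and> f y = M"
    then show "k0 \<le> y" using gt by force
  qed
  show ?thesis using k0T le gt G unfolding T_def M_def[symmetric] by blast
qed

lemma AA_add2[simp]: "AA a1 a2 (k+2) = AA a1 a2 k" by (simp add: AA_def)

lemma p_rec: "p a1 a2 k1 k2 k - AA a1 a2 k * p a1 a2 k1 k2 (k+1) + p a1 a2 k1 k2 (k+2) = 0"
proof (cases "k \<ge> 0")
  case True
  then obtain m where m: "k = int m" by (metis nonneg_eq_int)
  have "nat (int m + 1) = Suc m" "nat (int m + 2) = Suc (Suc m)" by auto
  then show ?thesis using m by (simp add: p_def AA_def)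
next
  case False
  show ?thesis
  proof (cases "k = -1")
    case True then show ?thesis by (simp add: p_def AA_def)
  next
    case False2: False
    define n where "n = nat (-k-2)"
    have n: "k = - int n - 2" using False False2 by (simp add: n_def)
    have e1: "nat (- k) = Suc (Suc n)" using n by simp
    have e2: "p a1 a2 k1 k2 (k+1) = pm a1 a2 k1 k2 (Suc n)" using n by (simp add: p_def nat_add_distrib)
    have e3: "p a1 a2 k1 k2 (k+2) = pm a1 a2 k1 k2 n" using n by (cases n) (simp_all add: p_def nat_add_distrib)
    have e4: "p a1 a2 k1 k2 k = pm a1 a2 k1 k2 (Suc (Suc n))" using n e1 by (simp add: p_def)
    show ?thesis using e2 e3 e4 n by (simp add: AA_def)
  qed
qed



lemma gam_facts:
  assumes a1: "a1 \<ge> 1" and a2: "a2 \<ge> 1" and a12: "a1 * a2 > 4"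
  shows "gam a1 a2 k > 0" "gam a1 a2 (k+2) = gam a1 a2 k"
    "gam a1 a2 (k+1) = AA a1 a2 k - 1 / gam a1 a2 k"
proof -
  define X where "X = real_of_int a1 ^ 2 * real_of_int a2 ^ 2 - 4 * real_of_int a1 * real_of_int a2"
  define s where "s = sqrt X"
  define n where "n = real_of_int a1 * real_of_int a2"
  have n4: "n > 4" unfolding n_def using a12 by (metis of_int_less_iff of_int_mult of_int_numeral)
  have Xn: "X = n * (n - 4)"
    unfolding n_def X_def by (simp add: power_mult_distrib algebra_simps power2_eq_square)
  have X0: "X \<ge> 0" unfolding Xn using n4 by simp
  have s2: "s * s = X" unfolding s_def using X0 by simp
  have s0: "s \<ge> 0" unfolding s_def using X0 by simp
  have r1: "real_of_int a1 \<ge> 1" "real_of_int a2 \<ge> 1" using a1 a2 by simp_all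
  define t where "t = n + s"
  have t0: "t > 0" unfolding t_def using n4 s0 by simp
  have al: "alpha_c a1 a2 = t / (2 * a2)" unfolding alpha_c_def t_def s_def n_def X_def by simp
  have be: "beta_c a1 a2 = t / (2 * a1)" unfolding beta_c_def t_def s_def n_def X_def by simp
  have ap: "alpha_c a1 a2 > 0" "beta_c a1 a2 > 0" unfolding al be using t0 r1 by simp_all
  have tt: "t * t = 2 * n * t - 4 * n" unfolding t_def using s2 Xn by (simp add: algebra_simps)
  have A1: "alpha_c a1 a2 = a1 - 1 / beta_c a1 a2"
    unfolding al be using t0 r1 tt unfolding n_def
    by (simp add: field_simps)
  have A2: "beta_c a1 a2 = a2 - 1 / alpha_c a1 a2"
    unfolding al be using t0 r1 tt unfolding n_def
    by (simp add: field_simps)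
  show "gam a1 a2 k > 0" using ap by (simp add: gam_def)
  show "gam a1 a2 (k+2) = gam a1 a2 k" by (simp add: gam_def)
  show "gam a1 a2 (k+1) = AA a1 a2 k - 1 / gam a1 a2 k" using A1 A2 by (simp add: gam_def AA_def)
qed



definition Cond :: "(int \<Rightarrow> int) \<Rightarrow> (int \<Rightarrow> real) \<Rightarrow> (int \<Rightarrow> int) \<Rightarrow> bool" where
  "Cond P g u \<longleftrightarrow> (\<forall>k. 0 \<le> u k \<and> u k \<le> P k) \<and> (\<forall>k. real_of_int (u (k+1)) \<le> g k * u k)
     \<and> (\<forall>k. real_of_int (P k - u k) \<le> g (k+1) * real_of_int (P (k+1) - u (k+1)))"

lemma e_step:
  fixes u P A :: "int \<Rightarrow> int" and g :: "int \<Rightarrow> real"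
  assumes gpos: "\<And>k. g k > 0" and g2: "\<And>k. g (k+2) = g k" and g1: "\<And>k. g (k+1) = A k - 1 / g k"
    and prec: "\<And>k. P k - A k * P (k+1) + P (k+2) = 0"
    and C: "Cond P g u" and D: "u k0 - A k0 * u (k0+1) + u (k0+2) \<ge> 1"
  shows "Cond P g (u(k0 := u k0 - 1))"
proof -
  have Cc: "\<And>k. 0 \<le> u k \<and> u k \<le> P k" and Ca: "\<And>k. real_of_int (u (k+1)) \<le> g k * u k"
    and Cb: "\<And>k. real_of_int (P k - u k) \<le> g (k+1) * real_of_int (P (k+1) - u (k+1))"
    using C unfolding Cond_def by blast+
  let ?g = "g k0"
  have gp: "?g > 0" by (rule gpos)
  have u1: "real_of_int (u (k0+1)) \<ge> 0" using Cc by simp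
  have a1: "real_of_int (u (k0+2)) \<le> (A k0 - 1/?g) * u (k0+1)"
    using Ca[of "k0+1"] g1[of k0] by (simp add: add.assoc)
  have Dr: "real_of_int (u k0) - real_of_int (A k0) * real_of_int (u (k0+1)) + real_of_int (u (k0+2)) \<ge> 1"
    using D by (metis of_int_1 of_int_add of_int_diff of_int_le_iff of_int_mult)
  have "real_of_int (u k0) \<ge> 1 + u (k0+1) / ?g"
    using a1 Dr by (simp add: algebra_simps)
  then have "?g * (real_of_int (u k0) - 1) \<ge> ?g * (u (k0+1) / ?g)"
    using gp by (intro mult_left_mono) auto
  then have K1: "real_of_int (u (k0+1)) \<le> ?g * real_of_int (u k0 - 1)" using gp by simp
  have "?g * real_of_int (u k0 - 1) \<ge> 0" using K1 u1 by linarith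
  then have K0: "u k0 - 1 \<ge> 0" using gp by (simp add: zero_le_mult_iff)
  define v where "v k = P k - u k" for k
  have b1: "real_of_int (v (k0+1)) \<le> ?g * v (k0+2)"
    using Cb[of "k0+1"] g2[of k0] by (simp add: v_def add.assoc)
  have Dv: "v k0 - A k0 * v (k0+1) + v (k0+2) \<le> -1"
    using D prec[of k0] by (simp add: v_def algebra_simps)
  have Dvr: "real_of_int (v k0) - real_of_int (A k0) * real_of_int (v (k0+1)) + real_of_int (v (k0+2)) \<le> -1"
    using Dv by (metis of_int_1 of_int_add of_int_diff of_int_le_iff of_int_mult of_int_minus)
  have "real_of_int (v (k0+2)) \<ge> v (k0+1) / ?g"
    using b1 gp by (simp add: field_simps)
  then have "real_of_int (A k0) * real_of_int (v (k0+1)) - v (k0+1) / ?g \<ge> 1 + v k0"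
    using Dvr by linarith
  moreover have "g (k0+1) * real_of_int (v (k0+1)) = real_of_int (A k0) * real_of_int (v (k0+1)) - v (k0+1) / ?g"
    unfolding g1[of k0] by (simp add: left_diff_distrib)
  moreover have "real_of_int (P k0 - (u k0 - 1)) = v k0 + 1" by (simp add: v_def)
  ultimately have K2: "real_of_int (P k0 - (u k0 - 1)) \<le> g (k0+1) * real_of_int (P (k0+1) - u (k0+1))"
    unfolding v_def by linarith
  show ?thesis unfolding Cond_def
  proof (intro conjI allI)
    fix k
    show "0 \<le> (u(k0 := u k0 - 1)) k"
      using Cc[of k] K0 by auto
  next
    fix k
    show "(u(k0 := u k0 - 1)) k \<le> P k"
      using Cc[of k] K0 by auto
  next
    fix k
    show "real_of_int ((u(k0 := u k0 - 1)) (k+1)) \<le> g k * (u(k0 := u k0 - 1)) k"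
    proof -
      consider "k = k0" | "k+1 = k0" | "k \<noteq> k0" "k+1 \<noteq> k0" by blast
      then show ?thesis
      proof cases
        case 1 then show ?thesis using K1 by simp
      next
        case 2
        have "real_of_int (u k0 - 1) \<le> real_of_int (u k0)" by simp
        also have "\<dots> \<le> g k * u k" using Ca[of k] 2 by simp
        finally show ?thesis using 2 by simp
      next
        case 3 then show ?thesis using Ca[of k] by simp
      qed
    qed
  next
    fix k
    show "real_of_int (P k - (u(k0 := u k0 - 1)) k) \<le> g (k+1) * real_of_int (P (k+1) - (u(k0 := u k0 - 1)) (k+1))"
    proof -
      consider "k = k0" | "k+1 = k0" | "k \<noteq> k0" "k+1 \<noteq> k0" by blast
      then show ?thesis
      proof cases
        case 1 then show ?thesis using K2 by simp
      next
        case 2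
        have "real_of_int (P k - u k) \<le> g (k+1) * real_of_int (P (k+1) - u (k+1))" by (rule Cb)
        also have "\<dots> \<le> g (k+1) * real_of_int (P (k+1) - (u (k+1) - 1))"
          using gpos[of "k+1"] by (intro mult_left_mono) auto
        finally show ?thesis using 2 by simp
      next
        case 3 then show ?thesis using Cb[of k] by simp
      qed
    qed
  qed
qed

lemma f_step:
  fixes u P A :: "int \<Rightarrow> int" and g :: "int \<Rightarrow> real"
  assumes gpos: "\<And>k. g k > 0" and g2: "\<And>k. g (k+2) = g k" and g1: "\<And>k. g (k+1) = A k - 1 / g k"
    and prec: "\<And>k. P k - A k * P (k+1) + P (k+2) = 0"
    and C: "Cond P g u" and D: "u j - A j * u (j+1) + u (j+2) \<le> -1"
  shows "Cond P g (u(j+2 := u (j+2) + 1))"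
proof -
  have Cc: "\<And>k. 0 \<le> u k \<and> u k \<le> P k" and Ca: "\<And>k. real_of_int (u (k+1)) \<le> g k * u k"
    and Cb: "\<And>k. real_of_int (P k - u k) \<le> g (k+1) * real_of_int (P (k+1) - u (k+1))"
    using C unfolding Cond_def by blast+
  let ?g = "g j"
  have gp: "?g > 0" by (rule gpos)
  have a0: "real_of_int (u j) \<ge> u (j+1) / ?g"
    using Ca[of j] gp by (simp add: field_simps)
  have Dr: "real_of_int (u j) - real_of_int (A j) * real_of_int (u (j+1)) + real_of_int (u (j+2)) \<le> -1"
    using D by (metis of_int_1 of_int_add of_int_diff of_int_le_iff of_int_mult of_int_minus)
  have "real_of_int (A j) * real_of_int (u (j+1)) - u (j+1) / ?g \<ge> 1 + u (j+2)"
    using a0 Dr by linarith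
  moreover have "g (j+1) * real_of_int (u (j+1)) = real_of_int (A j) * real_of_int (u (j+1)) - u (j+1) / ?g"
    unfolding g1[of j] by (simp add: left_diff_distrib)
  ultimately have K1: "real_of_int (u (j+2) + 1) \<le> g (j+1) * real_of_int (u (j+1))" by simp
  define v where "v k = P k - u k" for k
  have v1: "real_of_int (v (j+1)) \<ge> 0" using Cc[of "j+1"] by (simp add: v_def)
  have b0: "real_of_int (v j) \<le> g (j+1) * v (j+1)"
    using Cb[of j] by (simp add: v_def)
  have Dv: "v j - A j * v (j+1) + v (j+2) \<ge> 1"
    using D prec[of j] by (simp add: v_def algebra_simps)
  have Dvr: "real_of_int (v j) - real_of_int (A j) * real_of_int (v (j+1)) + real_of_int (v (j+2)) \<ge> 1"
    using Dv by (metis of_int_1 of_int_add of_int_diff of_int_le_iff of_int_mult)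
  have "g (j+1) * real_of_int (v (j+1)) = real_of_int (A j) * real_of_int (v (j+1)) - v (j+1) / ?g"
    unfolding g1[of j] by (simp add: left_diff_distrib)
  then have vv: "real_of_int (v (j+2)) - 1 \<ge> v (j+1) / ?g" using Dvr b0 by linarith
  have "v (j+1) / ?g \<ge> 0" using v1 gp by simp
  then have K0: "u (j+2) + 1 \<le> P (j+2)" using vv by (simp add: v_def)
  have "?g * (real_of_int (v (j+2)) - 1) \<ge> ?g * (v (j+1) / ?g)"
    using vv gp by (intro mult_left_mono) auto
  then have "real_of_int (v (j+1)) \<le> ?g * (real_of_int (v (j+2)) - 1)" using gp by simp
  then have K2: "real_of_int (P (j+1) - u (j+1)) \<le> g (j+2) * real_of_int (P (j+2) - (u (j+2) + 1))"
    using g2[of j] by (simp add: v_def algebra_simps)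
  show ?thesis unfolding Cond_def
  proof (intro conjI allI)
    fix k
    show "0 \<le> (u(j+2 := u (j+2) + 1)) k"
      using Cc[of k] by auto
  next
    fix k
    show "(u(j+2 := u (j+2) + 1)) k \<le> P k"
      using Cc[of k] K0 by auto
  next
    fix k
    show "real_of_int ((u(j+2 := u (j+2) + 1)) (k+1)) \<le> g k * (u(j+2 := u (j+2) + 1)) k"
    proof -
      consider "k+1 = j+2" | "k = j+2" | "k \<noteq> j+2" "k+1 \<noteq> j+2" by blast
      then show ?thesis
      proof cases
        case 1 then have "k = j+1" by simp
        then show ?thesis using K1 by simp
      next
        case 2
        have "real_of_int (u (k+1)) \<le> g k * u k" by (rule Ca)
        also have "\<dots> \<le> g k * (u k + 1)" using gpos[of k] by (intro mult_left_mono) auto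
        finally show ?thesis using 2 by simp
      next
        case 3 then show ?thesis using Ca[of k] by simp
      qed
    qed
  next
    fix k
    show "real_of_int (P k - (u(j+2 := u (j+2) + 1)) k) \<le> g (k+1) * real_of_int (P (k+1) - (u(j+2 := u (j+2) + 1)) (k+1))"
    proof -
      consider "k+1 = j+2" | "k = j+2" | "k \<noteq> j+2" "k+1 \<noteq> j+2" by blast
      then show ?thesis
      proof cases
        case 1 then have "k = j+1" by simp
        then show ?thesis using K2 by (simp add: add.assoc)
      next
        case 2
        have "real_of_int (P k - (u k + 1)) \<le> real_of_int (P k - u k)" by simp
        also have "\<dots> \<le> g (k+1) * real_of_int (P (k+1) - u (k+1))" by (rule Cb)
        finally show ?thesis using 2 by simp
      next
        case 3 then show ?thesis using Cb[of k] by simp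
      qed
    qed
  qed
qed



lemma Xi_all:
  "(\<forall>\<phi>\<in>Xi a1 a2 k1 k2. 0 \<le> \<phi> x) \<longleftrightarrow>
   (0 \<le> gam a1 a2 0 * real_of_int (p a1 a2 k1 k2 0) + gam a1 a2 0 * x 0 - x 1) \<and>
   (0 \<le> gam a1 a2 1 * real_of_int (p a1 a2 k1 k2 1) + x 0 - gam a1 a2 1 * x 1) \<and>
   (\<forall>k\<ge>1. 0 \<le> real_of_int (p a1 a2 k1 k2 k) - x k \<and> 0 \<le> gam a1 a2 k * x k - x (k+1) \<and>
      0 \<le> gam a1 a2 (k+1) * real_of_int (p a1 a2 k1 k2 (k+1)) - real_of_int (p a1 a2 k1 k2 k) + x k
          - gam a1 a2 (k+1) * x (k+1)) \<and>
   (\<forall>k\<le>0. 0 \<le> real_of_int (p a1 a2 k1 k2 k) + x k \<and> 0 \<le> x (k-1) - gam a1 a2 k * x k \<and>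
      0 \<le> gam a1 a2 (k-1) * real_of_int (p a1 a2 k1 k2 (k-1)) - real_of_int (p a1 a2 k1 k2 k)
          + gam a1 a2 (k-1) * x (k-1) - x k)"
  unfolding Xi_def Let_def by (simp add: ball_Un ball_UN)

definition UU :: "int \<Rightarrow> int \<Rightarrow> int \<Rightarrow> int \<Rightarrow> (int \<Rightarrow> int) \<Rightarrow> int \<Rightarrow> int" where
  "UU a1 a2 k1 k2 x k = x k + (if k \<le> 0 then p a1 a2 k1 k2 k else 0)"

lemma Sigma_iff:
  "x \<in> SigmaSet a1 a2 k1 k2 \<longleftrightarrow>
     finite {k. x k \<noteq> 0} \<and> Cond (p a1 a2 k1 k2) (gam a1 a2) (UU a1 a2 k1 k2 x)"
proof
  let ?P = "p a1 a2 k1 k2" and ?g = "gam a1 a2" and ?U = "UU a1 a2 k1 k2 x"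
  assume "x \<in> SigmaSet a1 a2 k1 k2"
  then have fin: "finite {k. x k \<noteq> 0}" and pos: "\<And>k. k \<ge> 1 \<Longrightarrow> x k \<ge> 0"
    and neg: "\<And>k. k \<le> 0 \<Longrightarrow> x k \<le> 0"
    and b0: "0 \<le> ?g 0 * real_of_int (?P 0) + ?g 0 * x 0 - x 1"
    and b1: "0 \<le> ?g 1 * real_of_int (?P 1) + x 0 - ?g 1 * x 1"
    and H1: "\<And>k. k \<ge> 1 \<Longrightarrow> 0 \<le> real_of_int (?P k) - x k \<and> 0 \<le> ?g k * x k - x (k+1) \<and>
      0 \<le> ?g (k+1) * real_of_int (?P (k+1)) - real_of_int (?P k) + x k - ?g (k+1) * x (k+1)"
    and H2: "\<And>k. k \<le> 0 \<Longrightarrow> 0 \<le> real_of_int (?P k) + x k \<and> 0 \<le> x (k-1) - ?g k * x k \<and>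
      0 \<le> ?g (k-1) * real_of_int (?P (k-1)) - real_of_int (?P k) + ?g (k-1) * x (k-1) - x k"
    unfolding SigmaSet_def Zset_def Xi_all by auto
  have Cc: "0 \<le> ?U k \<and> ?U k \<le> ?P k" for k
  proof (cases "k \<ge> 1")
    case True then show ?thesis using pos[of k] H1[of k] by (simp add: UU_def)
  next
    case False then show ?thesis using neg[of k] H2[of k] by (simp add: UU_def)
  qed
  have Ca: "real_of_int (?U (k+1)) \<le> ?g k * ?U k" for k
  proof -
    consider "k \<ge> 1" | "k = 0" | "k \<le> -1" by linarith
    then show ?thesis
    proof cases
      case 1 then show ?thesis using H1[of k] by (simp add: UU_def)
    next
      case 2 then show ?thesis using b0 by (simp add: UU_def algebra_simps)
    next
      case 3 then show ?thesis using H2[of "k+1"] by (simp add: UU_def algebra_simps)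
    qed
  qed
  have Cb: "real_of_int (?P k - ?U k) \<le> ?g (k+1) * real_of_int (?P (k+1) - ?U (k+1))" for k
  proof -
    consider "k \<ge> 1" | "k = 0" | "k \<le> -1" by linarith
    then show ?thesis
    proof cases
      case 1 then show ?thesis using H1[of k] by (simp add: UU_def algebra_simps)
    next
      case 2 then show ?thesis using b1 by (simp add: UU_def algebra_simps)
    next
      case 3 then show ?thesis using H2[of "k+1"] by (simp add: UU_def algebra_simps)
    qed
  qed
  show "finite {k. x k \<noteq> 0} \<and> Cond ?P ?g ?U" using fin Cc Ca Cb unfolding Cond_def by blast
next
  let ?P = "p a1 a2 k1 k2" and ?g = "gam a1 a2" and ?U = "UU a1 a2 k1 k2 x"
  assume "finite {k. x k \<noteq> 0} \<and> Cond ?P ?g ?U"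
  then have fin: "finite {k. x k \<noteq> 0}" and Cc: "\<And>k. 0 \<le> ?U k \<and> ?U k \<le> ?P k"
    and Ca: "\<And>k. real_of_int (?U (k+1)) \<le> ?g k * ?U k"
    and Cb: "\<And>k. real_of_int (?P k - ?U k) \<le> ?g (k+1) * real_of_int (?P (k+1) - ?U (k+1))"
    unfolding Cond_def by blast+
  have pos: "\<forall>k\<ge>1. x k \<ge> 0"
  proof (intro allI impI)
    fix k :: int assume "k \<ge> 1" then show "x k \<ge> 0" using Cc[of k] by (simp add: UU_def)
  qed
  have neg: "\<forall>k\<le>0. x k \<le> 0"
  proof (intro allI impI)
    fix k :: int assume "k \<le> 0" then show "x k \<le> 0" using Cc[of k] by (simp add: UU_def)
  qed
  have b0: "0 \<le> ?g 0 * real_of_int (?P 0) + ?g 0 * x 0 - x 1"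
    using Ca[of 0] by (simp add: UU_def algebra_simps)
  have b1: "0 \<le> ?g 1 * real_of_int (?P 1) + x 0 - ?g 1 * x 1"
    using Cb[of 0] by (simp add: UU_def algebra_simps)
  have H1: "\<forall>k\<ge>1. 0 \<le> real_of_int (?P k) - x k \<and> 0 \<le> ?g k * x k - x (k+1) \<and>
      0 \<le> ?g (k+1) * real_of_int (?P (k+1)) - real_of_int (?P k) + x k - ?g (k+1) * x (k+1)"
  proof (intro allI impI conjI)
    fix k :: int assume k: "k \<ge> 1"
    show "0 \<le> real_of_int (?P k) - x k" using Cc[of k] k by (simp add: UU_def)
    show "0 \<le> ?g k * x k - x (k+1)" using Ca[of k] k by (simp add: UU_def)
    show "0 \<le> ?g (k+1) * real_of_int (?P (k+1)) - real_of_int (?P k) + x k - ?g (k+1) * x (k+1)"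
      using Cb[of k] k by (simp add: UU_def algebra_simps)
  qed
  have H2: "\<forall>k\<le>0. 0 \<le> real_of_int (?P k) + x k \<and> 0 \<le> x (k-1) - ?g k * x k \<and>
      0 \<le> ?g (k-1) * real_of_int (?P (k-1)) - real_of_int (?P k) + ?g (k-1) * x (k-1) - x k"
  proof (intro allI impI conjI)
    fix k :: int assume k: "k \<le> 0"
    show "0 \<le> real_of_int (?P k) + x k" using Cc[of k] k by (simp add: UU_def)
    show "0 \<le> x (k-1) - ?g k * x k" using Cb[of "k-1"] k by (simp add: UU_def algebra_simps)
    show "0 \<le> ?g (k-1) * real_of_int (?P (k-1)) - real_of_int (?P k) + ?g (k-1) * x (k-1) - x k"
      using Ca[of "k-1"] k by (simp add: UU_def algebra_simps)
  qed
  show "x \<in> SigmaSet a1 a2 k1 k2"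
    unfolding SigmaSet_def Zset_def Xi_all using fin pos neg b0 b1 H1 H2 by blast
qed



lemma sZ_diff_U:
  assumes fin: "finite {j. x j \<noteq> 0}"
  shows "sigmaZ a1 a2 k1 (-k2) x k - sigmaZ a1 a2 k1 (-k2) x (k+2)
     = UU a1 a2 k1 k2 x k - AA a1 a2 k * UU a1 a2 k1 k2 x (k+1) + UU a1 a2 k1 k2 x (k+2)"
proof -
  have e: "sigmaZ a1 a2 k1 (-k2) x k - sigmaZ a1 a2 k1 (-k2) x (k+2)
     = x k - AA a1 a2 k * x (k+1) + x (k+2) - (if k \<le> 0 then mm k1 (-k2) (ik k) else 0)
       + (if k + 2 \<le> 0 then mm k1 (-k2) (ik k) else 0)"
    using sigmaZ_eq[OF fin, of a1 a2 k1 "-k2" k] sigmaZ_eq[OF fin, of a1 a2 k1 "-k2" "k+2"]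
      sp_diff[OF fin, of a1 a2 k] by simp
  have pr: "p a1 a2 k1 k2 k - AA a1 a2 k * p a1 a2 k1 k2 (k+1) + p a1 a2 k1 k2 (k+2) = 0"
    by (rule p_rec)
  have p0: "p a1 a2 k1 k2 0 = k2" and p1: "p a1 a2 k1 k2 1 = k1" by (simp_all add: p_def)
  consider "k \<ge> 1" | "k = 0" | "k = -1" | "k \<le> -2" by linarith
  then show ?thesis
  proof cases
    case 1 then show ?thesis using e by (simp add: UU_def)
  next
    case 2 then show ?thesis using e p0 by (simp add: UU_def mm_def ik_def)
  next
    case 3 then show ?thesis using e p0 p1 pr by (simp add: UU_def mm_def ik_def AA_def algebra_simps)
  next
    case 4 then show ?thesis using e pr by (simp add: UU_def algebra_simps)
  qed
qed

lemma UU_upd: "UU a1 a2 k1 k2 (x(k0 := x k0 + d)) = (UU a1 a2 k1 k2 x)(k0 := UU a1 a2 k1 k2 x k0 + d)"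
  by (rule ext) (simp add: UU_def)

lemma fin_upd: "finite {j. x j \<noteq> (0::int)} \<Longrightarrow> finite {j. (x(k0 := v)) j \<noteq> 0}"
  by (rule finite_subset[of _ "insert k0 {j. x j \<noteq> 0}"]) auto

lemma ik_self: "i \<in> {1, 2} \<Longrightarrow> ik i = i" by (auto simp: ik_def)

lemma e_closed:
  assumes a1: "a1 \<ge> 1" and a2: "a2 \<ge> 1" and a12: "a1 * a2 > 4"
    and xS: "x \<in> SigmaSet a1 a2 k1 k2" and i: "i \<in> {1, 2}"
    and ey: "etildeZ a1 a2 k1 (- k2) i x = Some y"
  shows "y \<in> SigmaSet a1 a2 k1 k2"
proof -
  let ?f = "sigmaZ a1 a2 k1 (-k2) x"
  let ?M = "Max {?f k | k. ik k = i}"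
  have fin: "finite {j. x j \<noteq> 0}" and C: "Cond (p a1 a2 k1 k2) (gam a1 a2) (UU a1 a2 k1 k2 x)"
    using xS Sigma_iff by blast+
  obtain N where N: "N \<ge> 0" "\<And>j. x j \<noteq> 0 \<Longrightarrow> -N \<le> j \<and> j \<le> N"
    using supp_bound[OF fin] by blast
  have eps: "?M > 0" and y: "y = x((GREATEST k. ik k = i \<and> ?f k = ?M) := x (GREATEST k. ik k = i \<and> ?f k = ?M) - 1)"
    using ey unfolding etildeZ_def epsZ_def sigmaZ_I_def Let_def by (auto split: if_splits)
  have hi: "?f k < ?M" if "ik k = i" "k > N" for k
  proof -
    have "?f k = 0" using sigmaZ_eq[OF fin, of a1 a2 k1 "-k2" k] sp_high[of x N k a1 a2] N that by auto
    then show ?thesis using eps by simp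
  qed
  obtain k0 where k0: "ik k0 = i" "?f k0 = ?M" "\<forall>k. ik k = i \<longrightarrow> ?f k \<le> ?M"
    "\<forall>k. ik k = i \<and> k > k0 \<longrightarrow> ?f k < ?M" "(GREATEST k. ik k = i \<and> ?f k = ?M) = k0"
    using greatest_max[of ?f "\<lambda>k. ik k = i" i N, OF fin_sub[OF fin_sZ[OF fin]] ik_self[OF i] hi] by auto
  have "?f (k0+2) < ?f k0" using k0 by simp
  then have D: "UU a1 a2 k1 k2 x k0 - AA a1 a2 k0 * UU a1 a2 k1 k2 x (k0+1) + UU a1 a2 k1 k2 x (k0+2) \<ge> 1"
    using sZ_diff_U[OF fin, of a1 a2 k1 k2 k0] by simp
  have y': "y = x(k0 := x k0 + (-1))" using y k0(5) by simp
  have "Cond (p a1 a2 k1 k2) (gam a1 a2) ((UU a1 a2 k1 k2 x)(k0 := UU a1 a2 k1 k2 x k0 - 1))"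
    by (rule e_step[OF _ _ _ p_rec C D]) (use gam_facts[OF a1 a2 a12] in auto)
  then have "Cond (p a1 a2 k1 k2) (gam a1 a2) (UU a1 a2 k1 k2 y)"
    unfolding y' UU_upd by simp
  moreover have "finite {j. y j \<noteq> 0}" unfolding y' by (rule fin_upd[OF fin])
  ultimately show ?thesis using Sigma_iff by blast
qed

lemma f_closed:
  assumes a1: "a1 \<ge> 1" and a2: "a2 \<ge> 1" and a12: "a1 * a2 > 4"
    and xS: "x \<in> SigmaSet a1 a2 k1 k2" and i: "i \<in> {1, 2}"
    and fy: "ftildeZ a1 a2 k1 (- k2) i x = Some y"
  shows "y \<in> SigmaSet a1 a2 k1 k2"
proof -
  let ?f = "sigmaZ a1 a2 k1 (-k2) x"
  let ?M = "Max {?f k | k. ik k = i}"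
  have fin: "finite {j. x j \<noteq> 0}" and C: "Cond (p a1 a2 k1 k2) (gam a1 a2) (UU a1 a2 k1 k2 x)"
    using xS Sigma_iff by blast+
  obtain N where N: "N \<ge> 0" "\<And>j. x j \<noteq> 0 \<Longrightarrow> -N \<le> j \<and> j \<le> N"
    using supp_bound[OF fin] by blast
  have phi: "?M + wtc a1 a2 k1 (-k2) x i > 0" and y: "y = x((LEAST k. ik k = i \<and> ?f k = ?M) := x (LEAST k. ik k = i \<and> ?f k = ?M) + 1)"
    using fy unfolding ftildeZ_def phiZ_def epsZ_def sigmaZ_I_def Let_def by (auto split: if_splits)
  have lo: "?f k < ?M" if "ik k = i" "k < -N" for k
  proof -
    have "?f k = - wtc a1 a2 k1 (-k2) x i"
      using sigmaZ_eq[OF fin, of a1 a2 k1 "-k2" k] sp_low[of x N k a1 a2] N that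
      by (auto simp: wtc_eq)
    then show ?thesis using phi by simp
  qed
  obtain k0 where k0: "ik k0 = i" "?f k0 = ?M" "\<forall>k. ik k = i \<longrightarrow> ?f k \<le> ?M"
    "\<forall>k. ik k = i \<and> k < k0 \<longrightarrow> ?f k < ?M" "(LEAST k. ik k = i \<and> ?f k = ?M) = k0"
    using least_max[of ?f "\<lambda>k. ik k = i" i "-N", OF fin_sub[OF fin_sZ[OF fin]] ik_self[OF i] lo] by auto
  have "?f (k0-2) < ?f k0" using k0 by simp
  then have D: "UU a1 a2 k1 k2 x (k0-2) - AA a1 a2 (k0-2) * UU a1 a2 k1 k2 x (k0-2+1) + UU a1 a2 k1 k2 x (k0-2+2) \<le> -1"
    using sZ_diff_U[OF fin, of a1 a2 k1 k2 "k0-2"] by simp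
  have y': "y = x(k0-2+2 := x (k0-2+2) + 1)" using y k0(5) by simp
  have "Cond (p a1 a2 k1 k2) (gam a1 a2) ((UU a1 a2 k1 k2 x)(k0-2+2 := UU a1 a2 k1 k2 x (k0-2+2) + 1))"
    by (rule f_step[OF _ _ _ p_rec C D]) (use gam_facts[OF a1 a2 a12] in auto)
  then have "Cond (p a1 a2 k1 k2) (gam a1 a2) (UU a1 a2 k1 k2 y)"
    unfolding y' UU_upd by simp
  moreover have "finite {j. y j \<noteq> 0}" unfolding y' by (rule fin_upd[OF fin])
  ultimately show ?thesis using Sigma_iff by blast
qed



lemma sum_supp:
  fixes x :: "int \<Rightarrow> int"
  assumes T: "finite T" "{j. x j \<noteq> 0} \<subseteq> T"
  shows "(\<Sum>j\<in>{j. R j \<and> x j \<noteq> 0}. c j * x j) = (\<Sum>j\<in>{j\<in>T. R j}. c j * x j)"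
proof (rule sum.mono_neutral_left)
  show "finite {j \<in> T. R j}" using T by simp
  show "{j. R j \<and> x j \<noteq> 0} \<subseteq> {j \<in> T. R j}" using T by auto
  show "\<forall>i\<in>{j \<in> T. R j} - {j. R j \<and> x j \<noteq> 0}. c i * x i = 0" by auto
qed

lemma sum_upd:
  fixes x :: "int \<Rightarrow> int"
  assumes "finite A"
  shows "(\<Sum>j\<in>A. c j * (x(k0 := x k0 + d)) j) = (\<Sum>j\<in>A. c j * x j) + (if k0 \<in> A then c k0 * d else 0)"
proof -
  have "(\<Sum>j\<in>A. c j * (x(k0 := x k0 + d)) j) = (\<Sum>j\<in>A. c j * x j + (if j = k0 then c j * d else 0))"
    by (rule sum.cong) (auto simp: algebra_simps)
  also have "\<dots> = (\<Sum>j\<in>A. c j * x j) + (\<Sum>j\<in>A. (if j = k0 then c j * d else 0))"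
    by (rule sum.distrib)
  also have "(\<Sum>j\<in>A. (if j = k0 then c j * d else 0)) = (if k0 \<in> A then c k0 * d else 0)"
    using assms by (simp add: sum.delta')
  finally show ?thesis .
qed

lemma sp_upd:
  assumes fin: "finite {j. x j \<noteq> 0}"
  shows "sigma_plus a1 a2 (x(k0 := x k0 + d)) k = sigma_plus a1 a2 x k
     + (if k = k0 then d else if k < k0 then cartan a1 a2 (ik k) (ik k0) * d else 0)"
proof -
  let ?T = "insert k0 {j. x j \<noteq> 0}"
  let ?c = "\<lambda>j. cartan a1 a2 (ik k) (ik j)"
  have fT: "finite ?T" using fin by simp
  have s1: "(\<Sum>j\<in>{j. j > k \<and> x j \<noteq> 0}. ?c j * x j) = (\<Sum>j\<in>{j\<in>?T. j > k}. ?c j * x j)"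
    by (rule sum_supp[OF fT]) auto
  have s2: "(\<Sum>j\<in>{j. j > k \<and> (x(k0 := x k0 + d)) j \<noteq> 0}. ?c j * (x(k0 := x k0 + d)) j)
      = (\<Sum>j\<in>{j\<in>?T. j > k}. ?c j * (x(k0 := x k0 + d)) j)"
    by (rule sum_supp[OF fT]) auto
  have s3: "(\<Sum>j\<in>{j\<in>?T. j > k}. ?c j * (x(k0 := x k0 + d)) j)
      = (\<Sum>j\<in>{j\<in>?T. j > k}. ?c j * x j) + (if k0 \<in> {j\<in>?T. j > k} then ?c k0 * d else 0)"
    by (rule sum_upd) (use fT in simp)
  show ?thesis unfolding sigma_plus_def s2 s3 s1[symmetric] by auto
qed

lemma sm_upd:
  assumes fin: "finite {j. x j \<noteq> 0}"
  shows "sigma_minus a1 a2 (x(k0 := x k0 + d)) k = sigma_minus a1 a2 x k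
     - (if k = k0 then d else if k > k0 then cartan a1 a2 (ik k) (ik k0) * d else 0)"
proof -
  let ?T = "insert k0 {j. x j \<noteq> 0}"
  let ?c = "\<lambda>j. cartan a1 a2 (ik k) (ik j)"
  have fT: "finite ?T" using fin by simp
  have s1: "(\<Sum>j\<in>{j. j < k \<and> x j \<noteq> 0}. ?c j * x j) = (\<Sum>j\<in>{j\<in>?T. j < k}. ?c j * x j)"
    by (rule sum_supp[OF fT]) auto
  have s2: "(\<Sum>j\<in>{j. j < k \<and> (x(k0 := x k0 + d)) j \<noteq> 0}. ?c j * (x(k0 := x k0 + d)) j)
      = (\<Sum>j\<in>{j\<in>?T. j < k}. ?c j * (x(k0 := x k0 + d)) j)"
    by (rule sum_supp[OF fT]) auto
  have s3: "(\<Sum>j\<in>{j\<in>?T. j < k}. ?c j * (x(k0 := x k0 + d)) j)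
      = (\<Sum>j\<in>{j\<in>?T. j < k}. ?c j * x j) + (if k0 \<in> {j\<in>?T. j < k} then ?c k0 * d else 0)"
    by (rule sum_upd) (use fT in simp)
  show ?thesis unfolding sigma_minus_def s2 s3 s1[symmetric] by auto
qed

lemma core:
  fixes a b c A :: int and g0 :: real
  assumes "g0 > 0" "b \<ge> 0" "real_of_int c \<le> (A - 1/g0) * b" "a - A * b + c \<ge> 1"
  shows "a \<ge> 1 \<and> real_of_int b \<le> g0 * real_of_int (a - 1)"
proof -
  have Dr: "real_of_int a - real_of_int A * real_of_int b + real_of_int c \<ge> 1"
    using assms(4) by (metis of_int_1 of_int_add of_int_diff of_int_le_iff of_int_mult)
  have "(A - 1/g0) * b = real_of_int A * real_of_int b - b / g0" by (simp add: left_diff_distrib)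
  then have "real_of_int a \<ge> 1 + b / g0" using Dr assms(3) by linarith
  then have "g0 * (real_of_int a - 1) \<ge> g0 * (b / g0)"
    using assms(1) by (intro mult_left_mono) auto
  then have K1: "real_of_int b \<le> g0 * real_of_int (a - 1)" using assms(1) by simp
  have "g0 * real_of_int (a - 1) \<ge> 0" using K1 assms(2) by linarith
  then have "a - 1 \<ge> 0" using assms(1) by (simp add: zero_le_mult_iff)
  then show ?thesis using K1 by simp
qed



definition SP :: "int \<Rightarrow> int \<Rightarrow> (int \<Rightarrow> int) \<Rightarrow> bool" where
  "SP a1 a2 y \<longleftrightarrow> finite {k. y k \<noteq> 0} \<and> (\<forall>k. k \<le> 0 \<longrightarrow> y k = 0) \<and> (\<forall>k. 0 \<le> y k)
     \<and> (\<forall>k\<ge>1. real_of_int (y (k+1)) \<le> gam a1 a2 k * y k)"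

lemma tot_upd:
  fixes y :: "int \<Rightarrow> int"
  assumes fin: "finite {k. y k \<noteq> 0}" and k0: "y k0 \<noteq> 0"
  shows "(\<Sum>k\<in>{k. (y(k0 := y k0 + d)) k \<noteq> 0}. (y(k0 := y k0 + d)) k) = (\<Sum>k\<in>{k. y k \<noteq> 0}. y k) + d"
proof -
  let ?S = "{k. y k \<noteq> 0}" and ?z = "y(k0 := y k0 + d)"
  have "(\<Sum>k\<in>{k. ?z k \<noteq> 0}. ?z k) = (\<Sum>k\<in>?S. ?z k)"
  proof (rule sum.mono_neutral_left)
    show "finite ?S" by (rule fin)
    show "{k. ?z k \<noteq> 0} \<subseteq> ?S" using k0 by auto
    show "\<forall>i\<in>?S - {k. ?z k \<noteq> 0}. ?z i = 0" by auto
  qed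
  also have "\<dots> = (\<Sum>k\<in>?S. 1 * ?z k)" by simp
  also have "\<dots> = (\<Sum>k\<in>?S. 1 * y k) + (if k0 \<in> ?S then 1 * d else 0)"
    by (rule sum_upd[OF fin])
  finally show ?thesis using k0 by simp
qed

lemma plus_in:
  assumes a1: "a1 \<ge> 1" and a2: "a2 \<ge> 1" and a12: "a1 * a2 > 4"
  shows "SP a1 a2 y \<Longrightarrow> y \<in> plus_img a1 a2"
proof (induction "nat (\<Sum>k\<in>{k. y k \<noteq> 0}. y k)" arbitrary: y rule: less_induct)
  case (less y)
  have fin: "finite {k. y k \<noteq> 0}" and zl: "\<And>k. k \<le> 0 \<Longrightarrow> y k = 0" and nn: "\<And>k. 0 \<le> y k"
    and cnd: "\<And>k. k \<ge> 1 \<Longrightarrow> real_of_int (y (k+1)) \<le> gam a1 a2 k * y k"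
    using less.prems unfolding SP_def by auto
  show ?case
  proof (cases "{k. y k \<noteq> 0} = {}")
    case True
    then have "y = (\<lambda>_. 0)" by auto
    then show ?thesis using plus_img.zero by simp
  next
    case False
    define S where "S = {k. y k \<noteq> 0}"
    define n0 where "n0 = Max S"
    have n0S: "n0 \<in> S" unfolding n0_def using Max_in[OF fin[folded S_def]] False[folded S_def] by blast
    have n0M: "\<And>j. y j \<noteq> 0 \<Longrightarrow> j \<le> n0" unfolding n0_def S_def using Max_ge[OF fin] by blast
    have yn0: "y n0 > 0" using n0S nn[of n0] unfolding S_def by simp
    have n01: "n0 \<ge> 1" using yn0 zl[of n0] by (cases "n0 \<le> 0") auto
    define i where "i = ik n0"
    have i12: "i \<in> {1, 2}" unfolding i_def using ik_12 by auto
    let ?f = "sigma_plus a1 a2 y"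
    let ?Q = "\<lambda>k. k \<ge> 1 \<and> ik k = i"
    let ?M = "Max {?f k | k. ?Q k}"
    have finM: "finite {?f k | k. ?Q k}" by (rule fin_sub[OF fin_sp[OF fin]])
    have "{j. j > n0 \<and> y j \<noteq> 0} = {}" using n0M by force
    then have fn0: "?f n0 = y n0" by (simp add: sigma_plus_def)
    have "?f n0 \<le> ?M" using finM n01 by (intro Max_ge) (auto simp: i_def)
    then have Mpos: "?M > 0" using fn0 yn0 by simp
    have hi: "?f k < ?M" if "?Q k" "k > n0" for k
      using sp_high[of y n0 k a1 a2] n0M that Mpos by simp
    obtain k0 where k0: "?Q k0" "?f k0 = ?M" "\<forall>k. ?Q k \<longrightarrow> ?f k \<le> ?M"
      "\<forall>k. ?Q k \<and> k > k0 \<longrightarrow> ?f k < ?M"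
      using greatest_max[of ?f ?Q n0 n0, OF finM _ hi] n01 by (auto simp: i_def)
    have "?f (k0+2) < ?f k0" using k0 by simp
    then have D: "y k0 - AA a1 a2 k0 * y (k0+1) + y (k0+2) \<ge> 1"
      using sp_diff[OF fin, of a1 a2 k0] by simp
    have gf: "gam a1 a2 k0 > 0" "gam a1 a2 (k0+1) = AA a1 a2 k0 - 1 / gam a1 a2 k0"
      using gam_facts[OF a1 a2 a12] by auto
    have "real_of_int (y (k0+2)) \<le> gam a1 a2 (k0+1) * y (k0+1)"
      using cnd[of "k0+1"] k0(1) by (simp add: add.assoc)
    then have K: "y k0 \<ge> 1 \<and> real_of_int (y (k0+1)) \<le> gam a1 a2 k0 * real_of_int (y k0 - 1)"
      using core[OF gf(1) nn[of "k0+1"] _ D] gf(2) by simp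
    define z where "z = y(k0 := y k0 + (-1))"
    have finz: "finite {k. z k \<noteq> 0}" unfolding z_def by (rule fin_upd[OF fin])
    have SPz: "SP a1 a2 z" unfolding SP_def
    proof (intro conjI allI impI)
      show "finite {k. z k \<noteq> 0}" by (rule finz)
      fix k
      show "k \<le> 0 \<Longrightarrow> z k = 0" using zl k0(1) unfolding z_def by auto
    next
      fix k show "0 \<le> z k" using nn[of k] K unfolding z_def by auto
    next
      fix k :: int assume k1: "k \<ge> 1"
      consider "k = k0" | "k+1 = k0" | "k \<noteq> k0" "k+1 \<noteq> k0" by blast
      then show "real_of_int (z (k+1)) \<le> gam a1 a2 k * z k"
      proof cases
        case 1 then show ?thesis using K unfolding z_def by simp
      next
        case 2
        have "real_of_int (y k0 - 1) \<le> real_of_int (y k0)" by simp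
        also have "\<dots> \<le> gam a1 a2 k * y k" using cnd[OF k1] 2 by simp
        finally show ?thesis using 2 unfolding z_def by simp
      next
        case 3 then show ?thesis using cnd[OF k1] unfolding z_def by simp
      qed
    qed
    have "y k0 \<noteq> 0" using K by simp
    then have tz: "(\<Sum>k\<in>{k. z k \<noteq> 0}. z k) = (\<Sum>k\<in>{k. y k \<noteq> 0}. y k) - 1"
      unfolding z_def using tot_upd[OF fin, of k0 "-1"] by (simp only:) simp
    have "(\<Sum>k\<in>{k. z k \<noteq> 0}. z k) \<ge> 0" using SPz unfolding SP_def by (simp add: sum_nonneg)
    then have "nat (\<Sum>k\<in>{k. z k \<noteq> 0}. z k) < nat (\<Sum>k\<in>{k. y k \<noteq> 0}. y k)" using tz by simp
    then have zP: "z \<in> plus_img a1 a2" using less.hyps SPz by blast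
    have vz: "sigma_plus a1 a2 z k = ?f k - (if k = k0 then 1 else if k < k0 then 2 else 0)"
      if "ik k = i" for k
      using sp_upd[OF fin, of a1 a2 k0 "-1" k] that k0(1) unfolding z_def by auto
    have MZ: "sigmaP_I a1 a2 z i = ?M - 1"
      unfolding sigmaP_I_def
    proof (rule Max_eqI)
      show "finite {sigma_plus a1 a2 z k | k. k \<ge> 1 \<and> ik k = i}" by (rule fin_sub[OF fin_sp[OF finz]])
      fix v assume "v \<in> {sigma_plus a1 a2 z k | k. k \<ge> 1 \<and> ik k = i}"
      then obtain k where k: "k \<ge> 1" "ik k = i" "v = sigma_plus a1 a2 z k" by blast
      show "v \<le> ?M - 1"
      proof (cases "k > k0")
        case True then show ?thesis using k0(4) k vz[of k] by force
      next
        case False then show ?thesis using k0(3) k vz[of k] by force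
      qed
    next
      show "?M - 1 \<in> {sigma_plus a1 a2 z k | k. k \<ge> 1 \<and> ik k = i}"
        using vz[of k0] k0(1,2) by force
    qed
    have LZ: "(LEAST k. k \<ge> 1 \<and> ik k = i \<and> sigma_plus a1 a2 z k = sigmaP_I a1 a2 z i) = k0"
    proof (rule Least_equality)
      show "k0 \<ge> 1 \<and> ik k0 = i \<and> sigma_plus a1 a2 z k0 = sigmaP_I a1 a2 z i"
        using k0(1,2) vz[of k0] MZ by simp
      fix k assume k: "k \<ge> 1 \<and> ik k = i \<and> sigma_plus a1 a2 z k = sigmaP_I a1 a2 z i"
      show "k0 \<le> k"
      proof (rule ccontr)
        assume "\<not> k0 \<le> k"
        then have "sigma_plus a1 a2 z k = ?f k - 2" using vz[of k] k by simp
        moreover have "?f k \<le> ?M" using k0(3) k by simp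
        ultimately show False using k MZ by simp
      qed
    qed
    have "fplus a1 a2 i z = z(k0 := z k0 + 1)" unfolding fplus_def Let_def LZ by simp
    also have "\<dots> = y" unfolding z_def by (rule ext) simp
    finally have "fplus a1 a2 i z = y" .
    then show ?thesis using plus_img.step[OF zP i12] by simp
  qed
qed

definition SM :: "int \<Rightarrow> int \<Rightarrow> (int \<Rightarrow> int) \<Rightarrow> bool" where
  "SM a1 a2 y \<longleftrightarrow> finite {k. y k \<noteq> 0} \<and> (\<forall>k. k \<ge> 1 \<longrightarrow> y k = 0) \<and> (\<forall>k. y k \<le> 0)
     \<and> (\<forall>k\<le>0. gam a1 a2 k * y k \<le> real_of_int (y (k-1)))"

lemma minus_in:
  assumes a1: "a1 \<ge> 1" and a2: "a2 \<ge> 1" and a12: "a1 * a2 > 4"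
  shows "SM a1 a2 y \<Longrightarrow> y \<in> minus_img a1 a2"
proof (induction "nat (- (\<Sum>k\<in>{k. y k \<noteq> 0}. y k))" arbitrary: y rule: less_induct)
  case (less y)
  have fin: "finite {k. y k \<noteq> 0}" and zl: "\<And>k. k \<ge> 1 \<Longrightarrow> y k = 0" and nn: "\<And>k. y k \<le> 0"
    and cnd: "\<And>k. k \<le> 0 \<Longrightarrow> gam a1 a2 k * y k \<le> real_of_int (y (k-1))"
    using less.prems unfolding SM_def by auto
  show ?case
  proof (cases "{k. y k \<noteq> 0} = {}")
    case True
    then have "y = (\<lambda>_. 0)" by auto
    then show ?thesis using minus_img.zero by simp
  next
    case False
    define S where "S = {k. y k \<noteq> 0}"
    define n0 where "n0 = Min S"
    have n0S: "n0 \<in> S" unfolding n0_def using Min_in[OF fin[folded S_def]] False[folded S_def] by blast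
    have n0M: "\<And>j. y j \<noteq> 0 \<Longrightarrow> n0 \<le> j" unfolding n0_def S_def using Min_le[OF fin] by blast
    have yn0: "y n0 < 0" using n0S nn[of n0] unfolding S_def by simp
    have n01: "n0 \<le> 0" using yn0 zl[of n0] by (cases "n0 \<ge> 1") auto
    define i where "i = ik n0"
    have i12: "i \<in> {1, 2}" unfolding i_def using ik_12 by auto
    let ?f = "sigma_minus a1 a2 y"
    let ?Q = "\<lambda>k. k \<le> 0 \<and> ik k = i"
    let ?M = "Max {?f k | k. ?Q k}"
    have finM: "finite {?f k | k. ?Q k}" by (rule fin_sub[OF fin_sm[OF fin]])
    have "{j. j < n0 \<and> y j \<noteq> 0} = {}" using n0M by force
    then have fn0: "?f n0 = - y n0" by (simp add: sigma_minus_def)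
    have "?f n0 \<le> ?M" using finM n01 by (intro Max_ge) (auto simp: i_def)
    then have Mpos: "?M > 0" using fn0 yn0 by simp
    have lo: "?f k < ?M" if "?Q k" "k < n0" for k
      using sm_low[of y "-n0" k a1 a2] n0M that Mpos by simp
    obtain k0 where k0: "?Q k0" "?f k0 = ?M" "\<forall>k. ?Q k \<longrightarrow> ?f k \<le> ?M"
      "\<forall>k. ?Q k \<and> k < k0 \<longrightarrow> ?f k < ?M"
      using least_max[of ?f ?Q n0 n0, OF finM _ lo] n01 by (auto simp: i_def)
    have "?f (k0-2) < ?f k0" using k0 by simp
    then have D: "(- y k0) - AA a1 a2 k0 * (- y (k0-1)) + (- y (k0-2)) \<ge> 1"
      using sm_diff[OF fin, of a1 a2 k0] by simp
    have gf: "gam a1 a2 k0 > 0" "gam a1 a2 (k0-1) = AA a1 a2 k0 - 1 / gam a1 a2 k0"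
    proof -
      show "gam a1 a2 k0 > 0" using gam_facts[OF a1 a2 a12] by auto
      have "gam a1 a2 (k0-2+1) = AA a1 a2 (k0-2) - 1 / gam a1 a2 (k0-2)"
        using gam_facts[OF a1 a2 a12] by blast
      moreover have "gam a1 a2 (k0-2) = gam a1 a2 k0"
        using gam_facts(2)[OF a1 a2 a12, of "k0-2"] by simp
      moreover have "AA a1 a2 (k0-2) = AA a1 a2 k0" using AA_add2[of a1 a2 "k0-2"] by simp
      ultimately show "gam a1 a2 (k0-1) = AA a1 a2 k0 - 1 / gam a1 a2 k0" by simp
    qed
    have "real_of_int (- y (k0-2)) \<le> gam a1 a2 (k0-1) * (- y (k0-1))"
      using cnd[of "k0-1"] k0(1) by simp
    then have K: "- y k0 \<ge> 1 \<and> real_of_int (- y (k0-1)) \<le> gam a1 a2 k0 * real_of_int (- y k0 - 1)"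
      using core[OF gf(1) _ _ D] gf(2) nn[of "k0-1"] by simp
    define z where "z = y(k0 := y k0 + 1)"
    have finz: "finite {k. z k \<noteq> 0}" unfolding z_def by (rule fin_upd[OF fin])
    have SMz: "SM a1 a2 z" unfolding SM_def
    proof (intro conjI allI impI)
      show "finite {k. z k \<noteq> 0}" by (rule finz)
      fix k
      show "k \<ge> 1 \<Longrightarrow> z k = 0" using zl k0(1) unfolding z_def by auto
    next
      fix k show "z k \<le> 0" using nn[of k] K unfolding z_def by auto
    next
      fix k :: int assume k1: "k \<le> 0"
      consider "k = k0" | "k-1 = k0" | "k \<noteq> k0" "k-1 \<noteq> k0" by blast
      then show "gam a1 a2 k * z k \<le> real_of_int (z (k-1))"
      proof cases
        case 1 then show ?thesis using K unfolding z_def by (simp add: algebra_simps)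
      next
        case 2
        have "gam a1 a2 k * y k \<le> real_of_int (y k0)" using cnd[OF k1] 2 by simp
        also have "\<dots> \<le> real_of_int (y k0 + 1)" by simp
        finally show ?thesis using 2 unfolding z_def by simp
      next
        case 3 then show ?thesis using cnd[OF k1] unfolding z_def by simp
      qed
    qed
    have "y k0 \<noteq> 0" using K by simp
    then have tz: "(\<Sum>k\<in>{k. z k \<noteq> 0}. z k) = (\<Sum>k\<in>{k. y k \<noteq> 0}. y k) + 1"
      unfolding z_def using tot_upd[OF fin, of k0 1] by simp
    have "(\<Sum>k\<in>{k. z k \<noteq> 0}. z k) \<le> 0" using SMz unfolding SM_def by (simp add: sum_nonpos)
    then have "nat (- (\<Sum>k\<in>{k. z k \<noteq> 0}. z k)) < nat (- (\<Sum>k\<in>{k. y k \<noteq> 0}. y k))" using tz by simp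
    then have zP: "z \<in> minus_img a1 a2" using less.hyps SMz by blast
    have vz: "sigma_minus a1 a2 z k = ?f k - (if k = k0 then 1 else if k > k0 then 2 else 0)"
      if "ik k = i" for k
      using sm_upd[OF fin, of a1 a2 k0 1 k] that k0(1) unfolding z_def by auto
    have MZ: "sigmaM_I a1 a2 z i = ?M - 1"
      unfolding sigmaM_I_def
    proof (rule Max_eqI)
      show "finite {sigma_minus a1 a2 z k | k. k \<le> 0 \<and> ik k = i}" by (rule fin_sub[OF fin_sm[OF finz]])
      fix v assume "v \<in> {sigma_minus a1 a2 z k | k. k \<le> 0 \<and> ik k = i}"
      then obtain k where k: "k \<le> 0" "ik k = i" "v = sigma_minus a1 a2 z k" by blast
      show "v \<le> ?M - 1"
      proof (cases "k < k0")
        case True then show ?thesis using k0(4) k vz[of k] by force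
      next
        case False then show ?thesis using k0(3) k vz[of k] by force
      qed
    next
      show "?M - 1 \<in> {sigma_minus a1 a2 z k | k. k \<le> 0 \<and> ik k = i}"
        using vz[of k0] k0(1,2) by force
    qed
    have GZ: "(GREATEST k. k \<le> 0 \<and> ik k = i \<and> sigma_minus a1 a2 z k = sigmaM_I a1 a2 z i) = k0"
    proof (rule Greatest_equality)
      show "k0 \<le> 0 \<and> ik k0 = i \<and> sigma_minus a1 a2 z k0 = sigmaM_I a1 a2 z i"
        using k0(1,2) vz[of k0] MZ by simp
      fix k assume k: "k \<le> 0 \<and> ik k = i \<and> sigma_minus a1 a2 z k = sigmaM_I a1 a2 z i"
      show "k \<le> k0"
      proof (rule ccontr)
        assume "\<not> k \<le> k0"
        then have "sigma_minus a1 a2 z k = ?f k - 2" using vz[of k] k by simp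
        moreover have "?f k \<le> ?M" using k0(3) k by simp
        ultimately show False using k MZ by simp
      qed
    qed
    have "eminus a1 a2 i z = z(k0 := z k0 - 1)" unfolding eminus_def Let_def GZ by simp
    also have "\<dots> = y" unfolding z_def by (rule ext) simp
    finally have "eminus a1 a2 i z = y" .
    then show ?thesis using minus_img.step[OF zP i12] by simp
  qed
qed



lemma Sigma_Im:
  assumes a1: "a1 \<ge> 1" and a2: "a2 \<ge> 1" and a12: "a1 * a2 > 4"
    and xS: "x \<in> SigmaSet a1 a2 k1 k2"
  shows "x \<in> Im_Psi a1 a2"
proof -
  have fin: "finite {k. x k \<noteq> 0}" and C: "Cond (p a1 a2 k1 k2) (gam a1 a2) (UU a1 a2 k1 k2 x)"
    using xS Sigma_iff by blast+
  have Cc: "\<And>k. 0 \<le> UU a1 a2 k1 k2 x k \<and> UU a1 a2 k1 k2 x k \<le> p a1 a2 k1 k2 k"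
    and Ca: "\<And>k. real_of_int (UU a1 a2 k1 k2 x (k+1)) \<le> gam a1 a2 k * UU a1 a2 k1 k2 x k"
    and Cb: "\<And>k. real_of_int (p a1 a2 k1 k2 k - UU a1 a2 k1 k2 x k)
       \<le> gam a1 a2 (k+1) * real_of_int (p a1 a2 k1 k2 (k+1) - UU a1 a2 k1 k2 x (k+1))"
    using C unfolding Cond_def by blast+
  let ?yp = "\<lambda>k. if k \<ge> 1 then x k else 0"
  let ?ym = "\<lambda>k. if k \<le> 0 then x k else 0"
  have "SP a1 a2 ?yp" unfolding SP_def
  proof (intro conjI allI impI)
    show "finite {k. ?yp k \<noteq> 0}" by (rule finite_subset[OF _ fin]) auto
  next
    fix k :: int show "k \<le> 0 \<Longrightarrow> ?yp k = 0" by simp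
  next
    fix k :: int show "0 \<le> ?yp k" using Cc[of k] by (cases "k \<ge> 1") (simp_all add: UU_def)
  next
    fix k :: int assume "k \<ge> 1"
    then show "real_of_int (?yp (k+1)) \<le> gam a1 a2 k * ?yp k" using Ca[of k] by (simp add: UU_def)
  qed
  then have P: "?yp \<in> plus_img a1 a2" by (rule plus_in[OF a1 a2 a12])
  have "SM a1 a2 ?ym" unfolding SM_def
  proof (intro conjI allI impI)
    show "finite {k. ?ym k \<noteq> 0}" by (rule finite_subset[OF _ fin]) auto
  next
    fix k :: int show "k \<ge> 1 \<Longrightarrow> ?ym k = 0" by simp
  next
    fix k :: int show "?ym k \<le> 0" using Cc[of k] by (cases "k \<le> 0") (simp_all add: UU_def)
  next
    fix k :: int assume "k \<le> 0"
    then show "gam a1 a2 k * ?ym k \<le> real_of_int (?ym (k-1))" using Cb[of "k-1"] by (simp add: UU_def)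
  qed
  then have M: "?ym \<in> minus_img a1 a2" by (rule minus_in[OF a1 a2 a12])
  show ?thesis unfolding Im_Psi_def using P M by simp
qed

theorem theorem3p2:
  fixes a1 a2 k1 k2 :: int
  assumes "a1 \<ge> 1" and "a2 \<ge> 1" and "a1 * a2 > 4"
    and "k1 > 0" and "k2 > 0"
    and "(a1 \<ge> 2 \<and> a2 \<ge> 2) \<longrightarrow>
           ((k2 \<le> k1 \<and> k1 < (a1 - 1) * k2) \<or> (k1 < k2 \<and> k2 \<le> (a2 - 1) * k1))"
    and "a1 = 1 \<longrightarrow> 2 * k1 \<le> k2 \<and> k2 \<le> (a2 - 2) * k1"
    and "a2 = 1 \<longrightarrow> 2 * k2 \<le> k1 \<and> k1 \<le> (a1 - 2) * k2"
  shows "SigmaSet a1 a2 k1 k2 \<subseteq> Im_Psi a1 a2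
    \<and> (\<forall>x\<in>SigmaSet a1 a2 k1 k2. \<forall>i\<in>{1, 2}.
          (case etildeZ a1 a2 k1 (- k2) i x of None \<Rightarrow> True
             | Some y \<Rightarrow> y \<in> SigmaSet a1 a2 k1 k2)
        \<and> (case ftildeZ a1 a2 k1 (- k2) i x of None \<Rightarrow> True
             | Some y \<Rightarrow> y \<in> SigmaSet a1 a2 k1 k2))"
proof (intro conjI ballI subsetI)
  fix x assume "x \<in> SigmaSet a1 a2 k1 k2"
  then show "x \<in> Im_Psi a1 a2" using Sigma_Im assms(1-3) by blast
next
  fix x i assume x: "x \<in> SigmaSet a1 a2 k1 k2" and i: "i \<in> {1::int, 2}"
  show "case etildeZ a1 a2 k1 (- k2) i x of None \<Rightarrow> True | Some y \<Rightarrow> y \<in> SigmaSet a1 a2 k1 k2"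
    using e_closed[OF assms(1-3) x i] by (cases "etildeZ a1 a2 k1 (- k2) i x") auto
  show "case ftildeZ a1 a2 k1 (- k2) i x of None \<Rightarrow> True | Some y \<Rightarrow> y \<in> SigmaSet a1 a2 k1 k2"
    using f_closed[OF assms(1-3) x i] by (cases "ftildeZ a1 a2 k1 (- k2) i x") auto
qed


end
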